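(* Let $E=\mathbb C/\Lambda$, $\Lambda=\mathbb Z\omega_1+\mathbb Z\omega_2$, $p_1,\dots,p_N\in E$ distinct, $\ell_i\in\mathbb N$, and suppose $\ell=\sum_i\ell_i$ is even. Then no solution $u$ of $\Delta u+e^u=4\pi\sum_{i=1}^N\ell_i\delta_{p_i}$ on $E$ is of type I, i.e. no developing map $f$ of a solution satisfies $f(z+\omega_1)=-f(z)$ and $f(z+\omega_2)=1/f(z)$.
   Context: A developing map of $u$ is a meromorphic function $f$ on $\mathbb C$ with $u=\log\frac{8|f'|^2}{(1+|f|^2)^2}$; it is unique up to $f\mapsto (pf-\bar q)/(qf+\bar p)$ with $\begin{pmatrix}p&-\bar q\\ q&\bar p\end{pmatrix}\in SU(2)$. *)

theory Defs
  imports "HOL-Complex_Analysis.Complex_Analysis"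
begin

definition lattice :: "complex \<Rightarrow> complex \<Rightarrow> complex set" where
  "lattice w1 w2 = {of_int m * w1 + of_int n * w2 | m n. True}"

definition C2_on :: "complex set \<Rightarrow> (complex \<Rightarrow> real) \<Rightarrow> bool" where
  "C2_on S u \<longleftrightarrow>
     (\<exists>(Du :: complex \<Rightarrow> complex \<Rightarrow>\<^sub>L real) (D2u :: complex \<Rightarrow> complex \<Rightarrow>\<^sub>L (complex \<Rightarrow>\<^sub>L real)).
        (\<forall>z\<in>S. (u has_derivative blinfun_apply (Du z)) (at z)) \<and>
        (\<forall>z\<in>S. (Du has_derivative blinfun_apply (D2u z)) (at z)) \<and>
        continuous_on S D2u)"

definition laplacian :: "(complex \<Rightarrow> real) \<Rightarrow> complex \<Rightarrow> real" where
  "laplacian u z =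
     frechet_derivative (\<lambda>w. frechet_derivative u (at w) 1) (at z) 1 +
     frechet_derivative (\<lambda>w. frechet_derivative u (at w) \<i>) (at z) \<i>"

text \<open>u (lifted to C) solves  Laplacian u + e^u = 4 pi sum_i l_i delta_{p_i}  on E = C/Lambda:
  u is Lambda-periodic, C^2 with  Laplacian u + e^u = 0  off the singular set
  {p_i} + Lambda, and near each p_i,  u - 2 l_i log|z - p_i|  stays bounded.\<close>
definition liouville_solution ::
  "complex \<Rightarrow> complex \<Rightarrow> nat \<Rightarrow> (nat \<Rightarrow> complex) \<Rightarrow> (nat \<Rightarrow> nat) \<Rightarrow> (complex \<Rightarrow> real) \<Rightarrow> bool" where
  "liouville_solution w1 w2 N p l u \<longleftrightarrow>
     (let S = {p i + w | i w. i < N \<and> w \<in> lattice w1 w2} in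
       (\<forall>z. u (z + w1) = u z \<and> u (z + w2) = u z) \<and>
       C2_on (- S) u \<and>
       (\<forall>z\<in>- S. laplacian u z + exp (u z) = 0) \<and>
       (\<forall>i<N. \<exists>r>0. \<exists>B. \<forall>z. 0 < cmod (z - p i) \<and> cmod (z - p i) < r \<longrightarrow>
            \<bar>u z - 2 * real (l i) * ln (cmod (z - p i))\<bar> \<le> B))"

definition developing_map :: "(complex \<Rightarrow> complex) \<Rightarrow> (complex \<Rightarrow> real) \<Rightarrow> bool" where
  "developing_map f u \<longleftrightarrow> f meromorphic_on UNIV \<and>
     (\<forall>\<^sub>\<approx>z. u z = ln (8 * (cmod (deriv f z))\<^sup>2 / (1 + (cmod (f z))\<^sup>2)\<^sup>2))"

definition type_I_map :: "complex \<Rightarrow> complex \<Rightarrow> (complex \<Rightarrow> complex) \<Rightarrow> bool" where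
  "type_I_map w1 w2 f \<longleftrightarrow>
     (\<forall>\<^sub>\<approx>z. f (z + w1) = - f z) \<and> (\<forall>\<^sub>\<approx>z. f (z + w2) = 1 / f z)"

end

theory Submission
  imports Defs
begin

definition ct :: "complex \<Rightarrow> complex \<Rightarrow> complex \<Rightarrow> real" where
  "ct w1 w2 z = Im (z / w1) / Im (w2 / w1)"
definition cs :: "complex \<Rightarrow> complex \<Rightarrow> complex \<Rightarrow> real" where
  "cs w1 w2 z = Re (z / w1) - ct w1 w2 z * Re (w2 / w1)"

lemma w1_nz: "Im (w2 / w1) \<noteq> 0 \<Longrightarrow> w1 \<noteq> 0" by auto

lemma ReIm_ofreal_mult: "Re (of_real r * c) = r * Re c" "Im (of_real r * c) = r * Im c"
  by simp_all

lemma coord_aux: "Im t \<noteq> 0 \<Longrightarrow> (c::complex) = of_real (Re c - Im c / Im t * Re t) + of_real (Im c / Im t) * t"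
  by (simp add: complex_eq_iff)

lemma coord_decomp:
  assumes "Im (w2 / w1) \<noteq> 0"
  shows "z = of_real (cs w1 w2 z) * w1 + of_real (ct w1 w2 z) * w2"
proof -
  have w1: "w1 \<noteq> 0" using assms by auto
  have "z / w1 = of_real (cs w1 w2 z) + of_real (ct w1 w2 z) * (w2 / w1)"
    unfolding cs_def ct_def by (rule coord_aux[OF assms])
  then show ?thesis using w1 by (simp add: field_simps)
qed

lemma coord_of:
  assumes "Im (w2 / w1) \<noteq> 0"
  shows "cs w1 w2 (of_real x * w1 + of_real y * w2) = x"
    "ct w1 w2 (of_real x * w1 + of_real y * w2) = y"
proof -
  have w1: "w1 \<noteq> 0" using assms by auto
  have e: "(of_real x * w1 + of_real y * w2) / w1 = of_real x + of_real y * (w2/w1)"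
    using w1 by (simp add: field_simps)
  show "ct w1 w2 (of_real x * w1 + of_real y * w2) = y"
    using assms unfolding ct_def e plus_complex.sel ReIm_ofreal_mult by simp
  then show "cs w1 w2 (of_real x * w1 + of_real y * w2) = x"
    using assms unfolding cs_def e plus_complex.sel ReIm_ofreal_mult by simp
qed

lemma coord_add:
  shows "cs w1 w2 (z + z') = cs w1 w2 z + cs w1 w2 z'" "ct w1 w2 (z + z') = ct w1 w2 z + ct w1 w2 z'"
  by (simp_all add: cs_def ct_def add_divide_distrib field_simps)

lemma coord_diff:
  shows "cs w1 w2 (z - z') = cs w1 w2 z - cs w1 w2 z'" "ct w1 w2 (z - z') = ct w1 w2 z - ct w1 w2 z'"
  by (simp_all add: cs_def ct_def diff_divide_distrib field_simps)

lemma coord_w: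
  assumes "Im (w2 / w1) \<noteq> 0"
  shows "cs w1 w2 w1 = 1" "ct w1 w2 w1 = 0" "cs w1 w2 w2 = 0" "ct w1 w2 w2 = 1"
  using coord_of[OF assms, of 1 0] coord_of[OF assms, of 0 1] by simp_all

lemma coord_scale:
  shows "cs w1 w2 (of_real r * z) = r * cs w1 w2 z" "ct w1 w2 (of_real r * z) = r * ct w1 w2 z"
proof -
  have e: "of_real r * z / w1 = of_real r * (z / w1)" by simp
  show "ct w1 w2 (of_real r * z) = r * ct w1 w2 z" unfolding ct_def e ReIm_ofreal_mult by simp
  then show "cs w1 w2 (of_real r * z) = r * cs w1 w2 z" unfolding cs_def e ReIm_ofreal_mult
    by (simp add: algebra_simps)
qed

lemma coord_eqI:
  assumes "Im (w2 / w1) \<noteq> 0" "cs w1 w2 z = cs w1 w2 z'" "ct w1 w2 z = ct w1 w2 z'"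
  shows "z = z'"
  using coord_decomp[OF assms(1), of z] coord_decomp[OF assms(1), of z'] assms(2,3) by simp

lemma ln_unbounded_at:
  fixes c :: complex
  assumes "eventually (\<lambda>z. \<bar>ln (cmod (z - c))\<bar> \<le> M) (at c)"
  shows False
proof -
  have "eventually (\<lambda>z. z \<noteq> c \<and> dist z c < exp (-(\<bar>M\<bar>+1))) (at c)"
    unfolding eventually_at by (rule exI[of _ "exp (-(\<bar>M\<bar>+1))"]) auto
  with assms have "eventually (\<lambda>z. False) (at c)"
  proof eventually_elim
    case (elim z)
    then have d: "0 < cmod (z - c)" "cmod (z - c) < exp (-(\<bar>M\<bar>+1))" by (auto simp: dist_norm)
    then have "ln (cmod (z - c)) < -(\<bar>M\<bar>+1)"
      by (metis ln_less_cancel_iff ln_exp exp_gt_zero)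
    with elim show False by linarith
  qed
  then show False by simp
qed

lemma ev_shift:
  fixes z w :: complex
  assumes "eventually P (at (z + w))"
  shows "eventually (\<lambda>x. P (x + w)) (at z)"
proof -
  have "filtermap (\<lambda>x. x - (-w)) (at z) = at (z - (-w))" by (rule filtermap_at_shift)
  then have "filtermap (\<lambda>x. x + w) (at z) = at (z + w)" by simp
  with assms have "eventually P (filtermap (\<lambda>x. x + w) (at z))" by simp
  then show ?thesis by (simp add: eventually_filtermap)
qed

lemma isCont_ev_zero:
  fixes h :: "complex \<Rightarrow> complex"
  assumes "isCont h z" "eventually (\<lambda>x. h x = 0) (at z)"
  shows "h z = 0"
proof -
  have "h \<midarrow>z\<rightarrow> h z" using assms(1) by (simp add: isCont_def)
  moreover have "h \<midarrow>z\<rightarrow> 0" using assms(2) by (simp add: tendsto_eventually)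
  ultimately show ?thesis using LIM_unique by blast
qed

lemma periodic_int:
  fixes u :: "complex \<Rightarrow> 'a" and w z :: complex and m :: int
  assumes "\<forall>z. u (z + w) = u z"
  shows "u (z + of_int m * w) = u z"
proof -
  have natc: "u (z + of_nat n * w) = u z" for n z
  proof (induction n arbitrary: z)
    case (Suc n)
    have "u (z + of_nat (Suc n) * w) = u ((z + w) + of_nat n * w)" by (simp add: algebra_simps)
    also have "\<dots> = u (z + w)" by (rule Suc)
    finally show ?case using assms by simp
  qed simp
  show ?thesis
  proof (cases "m \<ge> 0")
    case True
    then show ?thesis using natc[of z "nat m"] by simp
  next
    case False
    have "u z = u ((z + of_int m * w) + of_nat (nat (-m)) * w)" using False by (simp add: algebra_simps)
    also have "\<dots> = u (z + of_int m * w)" by (rule natc)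
    finally show ?thesis by simp
  qed
qed

lemma lattice_periodic:
  assumes "\<forall>z. u (z + w1) = u z \<and> u (z + w2) = u z" "v \<in> lattice w1 w2"
  shows "u (z + v) = u z"
proof -
  from assms(2) obtain m n where v: "v = of_int m * w1 + of_int n * w2" by (auto simp: lattice_def)
  have "u (z + v) = u ((z + of_int m * w1) + of_int n * w2)" by (simp add: v algebra_simps)
  also have "\<dots> = u (z + of_int m * w1)" by (rule periodic_int) (use assms in auto)
  also have "\<dots> = u z" by (rule periodic_int) (use assms in auto)
  finally show ?thesis .
qed

lemma alg_nonpole:
  fixes d A G n :: real
  assumes "d > 0" "A > 0" "G > 0"
  shows "ln (8 * (A * d powr n)\<^sup>2 / G\<^sup>2) = ln (8 * A\<^sup>2 / G\<^sup>2) + 2 * n * ln d"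
proof -
  define x where "x = d powr n"
  have x: "x > 0" using assms by (simp add: x_def)
  have "8 * (A * x)\<^sup>2 / G\<^sup>2 = (8 * A\<^sup>2 / G\<^sup>2) * x ^ 2"
    by (simp add: power_mult_distrib)
  also have "ln \<dots> = ln (8 * A\<^sup>2 / G\<^sup>2) + ln (x ^ 2)"
    by (rule ln_mult_pos) (use assms x in auto)
  also have "ln (x ^ 2) = 2 * ln x" using x by (simp add: ln_realpow)
  also have "ln x = n * ln d" using assms by (simp add: x_def ln_powr)
  finally show ?thesis by (simp add: x_def)
qed

lemma alg_pole:
  fixes d A Hh n m :: real
  assumes "d > 0" "A > 0" "Hh > 0"
  shows "ln (8 * (A * d powr n)\<^sup>2 / (1 + (Hh * d powr (-m))\<^sup>2)\<^sup>2) =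
         ln (8 * A\<^sup>2 / (d powr (2*m) + Hh\<^sup>2)\<^sup>2) + (2 * n + 4 * m) * ln d"
proof -
  define x where "x = d powr n"
  define y where "y = d powr m"
  have x: "x > 0" using assms by (simp add: x_def)
  have y: "y > 0" using assms by (simp add: y_def)
  have ym: "d powr (-m) = 1 / y" by (simp add: y_def powr_minus divide_inverse)
  have y2: "d powr (2*m) = y ^ 2"
    using assms by (simp add: y_def power2_eq_square powr_add[symmetric])
  have pos: "y ^ 2 + Hh\<^sup>2 > 0" using y by (simp add: add_pos_nonneg)
  have "8 * (A * x)\<^sup>2 / (1 + (Hh * (1 / y))\<^sup>2)\<^sup>2 =
        (8 * A\<^sup>2 / (y ^ 2 + Hh\<^sup>2)\<^sup>2) * (x ^ 2 * y ^ 4)"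
    using x y pos by (simp add: field_simps power2_eq_square power4_eq_xxxx)
  also have "ln \<dots> = ln (8 * A\<^sup>2 / (y ^ 2 + Hh\<^sup>2)\<^sup>2) + ln (x ^ 2 * y ^ 4)"
    by (rule ln_mult_pos) (use assms x y pos in auto)
  also have "ln (x ^ 2 * y ^ 4) = ln (x ^ 2) + ln (y ^ 4)"
    by (rule ln_mult_pos) (use x y in auto)
  also have "ln (x ^ 2) + ln (y ^ 4) = 2 * ln x + 4 * ln y" using x y by (simp add: ln_realpow)
  also have "ln x = n * ln d" using assms by (simp add: x_def ln_powr)
  also have "ln y = m * ln d" using assms by (simp add: y_def ln_powr)
  finally show ?thesis unfolding ym y2 x_def by (simp add: algebra_simps)
qed

lemma LOC:
  fixes g :: "complex \<Rightarrow> complex" and c :: complex and u :: "complex \<Rightarrow> real" and k :: nat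
  assumes nm: "g nicely_meromorphic_on UNIV"
    and nz: "frequently (\<lambda>z. deriv g z \<noteq> 0) (at c)"
    and ev_u: "eventually (\<lambda>z. u z = ln (8 * (cmod (deriv g z))\<^sup>2 / (1 + (cmod (g z))\<^sup>2)\<^sup>2)) (at c)"
    and bd: "eventually (\<lambda>z. \<bar>u z - 2 * real k * ln (cmod (z - c))\<bar> \<le> B) (at c)"
  shows "even (zorder (deriv g) c - int k)"
proof -
  have pos1: "1 + (cmod x)\<^sup>2 \<noteq> 0" for x :: complex
    using add_pos_nonneg[of 1 "(cmod x)\<^sup>2"] by simp
  define Q where "Q = (\<lambda>z. ln (8 * (cmod (deriv g z))\<^sup>2 / (1 + (cmod (g z))\<^sup>2)\<^sup>2))"
  have mero: "g meromorphic_on UNIV" using nm by (simp add: nicely_meromorphic_on_def)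
  have "deriv g meromorphic_on UNIV" by (rule meromorphic_on_deriv[OF mero])
  then have iso: "isolated_singularity_at (deriv g) c" and ness: "not_essential (deriv g) c"
    by (auto simp: meromorphic_on_altdef)
  define n where "n = zorder (deriv g) c"
  define K where "K = zor_poly (deriv g) c"
  obtain r where Kc: "K c \<noteq> 0" and r: "r > 0" and Kh: "K holomorphic_on cball c r"
    and Keq: "\<And>w. w \<in> cball c r - {c} \<Longrightarrow> deriv g w = K w * (w - c) powi n \<and> K w \<noteq> 0"
    using zorder_exist[OF iso ness nz, folded n_def K_def] by blast
  have Kcont: "isCont K c"
    using Kh r by (intro continuous_on_interior[of "cball c r"]) (auto intro: holomorphic_on_imp_continuous_on)
  have evr: "eventually (\<lambda>z. z \<in> ball c r - {c}) (at c)"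
    using r by (intro eventually_at_in_open) auto
  have "\<exists>e L. even (e - n) \<and> ((\<lambda>z. Q z - 2 * of_int e * ln (cmod (z - c))) \<longlongrightarrow> L) (at c)"
  proof (cases "is_pole g c")
    case False
    then have "g analytic_on {c}" using nm by (intro nicely_meromorphic_on_imp_analytic_at) auto
    then have gcont: "isCont g c" by (rule analytic_at_imp_isCont)
    define L where "L = ln (8 * (cmod (K c))\<^sup>2 / (1 + (cmod (g c))\<^sup>2)\<^sup>2)"
    have lim: "((\<lambda>z. ln (8 * (cmod (K z))\<^sup>2 / (1 + (cmod (g z))\<^sup>2)\<^sup>2)) \<longlongrightarrow> L) (at c)"
      unfolding L_def using Kc Kcont gcont
      by (intro tendsto_intros) (auto simp: isCont_def pos1)
    have "eventually (\<lambda>z. ln (8 * (cmod (K z))\<^sup>2 / (1 + (cmod (g z))\<^sup>2)\<^sup>2) =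
             Q z - 2 * of_int n * ln (cmod (z - c))) (at c)"
      using evr
    proof eventually_elim
      case (elim z)
      then have z: "z \<in> cball c r - {c}" by auto
      have d: "cmod (z - c) > 0" using z by auto
      have "cmod (deriv g z) = cmod (K z) * cmod (z - c) powr of_int n"
        using Keq[OF z] d by (simp add: norm_mult norm_power_int powr_real_of_int')
      moreover have "cmod (K z) > 0" using Keq[OF z] by simp
      moreover have "1 + (cmod (g z))\<^sup>2 > 0" by (simp add: add_pos_nonneg)
      ultimately show ?case unfolding Q_def using alg_nonpole[OF d] by simp
    qed
    with lim have "((\<lambda>z. Q z - 2 * of_int n * ln (cmod (z - c))) \<longlongrightarrow> L) (at c)"
      by (rule Lim_transform_eventually)
    then show ?thesis by (intro exI[of _ n] exI[of _ L]) auto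
  next
    case True
    have gmero: "isolated_singularity_at g c" "not_essential g c"
      using mero by (auto simp: meromorphic_on_altdef)
    have gfreq: "frequently (\<lambda>z. g z \<noteq> 0) (at c)"
      using True by (intro eventually_frequently) (auto simp: is_pole_def filterlim_at_infinity_imp_eventually_ne)
    define m where "m = - zorder g c"
    have mpos: "m > 0" using isolated_pole_imp_neg_zorder[OF gmero(1) True] by (simp add: m_def)
    define H where "H = zor_poly g c"
    obtain r2 where Hc: "H c \<noteq> 0" and r2: "r2 > 0" and Hh: "H holomorphic_on cball c r2"
      and Heq: "\<And>w. w \<in> cball c r2 - {c} \<Longrightarrow> g w = H w * (w - c) powi (-m) \<and> H w \<noteq> 0"
      using zorder_exist[OF gmero gfreq, folded H_def] unfolding m_def by auto
    have Hcont: "isCont H c"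
      using Hh r2 by (intro continuous_on_interior[of "cball c r2"]) (auto intro: holomorphic_on_imp_continuous_on)
    define L where "L = ln (8 * (cmod (K c))\<^sup>2 / (0 + (cmod (H c))\<^sup>2)\<^sup>2)"
    have lim0: "((\<lambda>z. cmod (z - c) powr (2 * real_of_int m)) \<longlongrightarrow> 0) (at c)"
    proof -
      have "((\<lambda>z. cmod (z - c) powr (2 * real_of_int m)) \<longlongrightarrow> cmod (c - c) powr (2 * real_of_int m)) (at c)"
        using mpos by (intro tendsto_intros) auto
      then show ?thesis by simp
    qed
    have lim: "((\<lambda>z. ln (8 * (cmod (K z))\<^sup>2 / (cmod (z - c) powr (2 * real_of_int m) + (cmod (H z))\<^sup>2)\<^sup>2)) \<longlongrightarrow> L) (at c)"
      unfolding L_def using Kc Hc Kcont Hcont lim0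
      by (intro tendsto_intros) (auto simp: isCont_def)
    have evr2: "eventually (\<lambda>z. z \<in> ball c r2 - {c}) (at c)"
      using r2 by (intro eventually_at_in_open) auto
    have "eventually (\<lambda>z. ln (8 * (cmod (K z))\<^sup>2 / (cmod (z - c) powr (2 * real_of_int m) + (cmod (H z))\<^sup>2)\<^sup>2) =
             Q z - 2 * of_int (n + 2 * m) * ln (cmod (z - c))) (at c)"
      using evr evr2
    proof eventually_elim
      case (elim z)
      then have z: "z \<in> cball c r - {c}" and z2: "z \<in> cball c r2 - {c}" by auto
      have d: "cmod (z - c) > 0" using z by auto
      have "cmod (deriv g z) = cmod (K z) * cmod (z - c) powr of_int n"
        using Keq[OF z] d by (simp add: norm_mult norm_power_int powr_real_of_int')
      moreover have "cmod (g z) = cmod (H z) * cmod (z - c) powr (- of_int m)"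
        using Heq[OF z2] d powr_real_of_int'[of "cmod (z - c)" "-m"] by (simp add: norm_mult norm_power_int)
      moreover have "cmod (K z) > 0" using Keq[OF z] by simp
      moreover have "cmod (H z) > 0" using Heq[OF z2] by simp
      ultimately show ?case unfolding Q_def
        using alg_pole[OF d, of "cmod (K z)" "cmod (H z)" "of_int n" "of_int m"] by (simp add: algebra_simps)
    qed
    with lim have "((\<lambda>z. Q z - 2 * of_int (n + 2 * m) * ln (cmod (z - c))) \<longlongrightarrow> L) (at c)"
      by (rule Lim_transform_eventually)
    then show ?thesis by (intro exI[of _ "n + 2 * m"] exI[of _ L]) auto
  qed
  then obtain e L where eL: "even (e - n)" and lim: "((\<lambda>z. Q z - 2 * of_int e * ln (cmod (z - c))) \<longlongrightarrow> L) (at c)"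
    by blast
  have "eventually (\<lambda>z. dist (Q z - 2 * of_int e * ln (cmod (z - c))) L < 1) (at c)"
    using lim by (rule tendstoD) simp
  have ek: "e = int k"
  proof (rule ccontr)
    assume ne: "e \<noteq> int k"
    have "eventually (\<lambda>z. \<bar>ln (cmod (z - c))\<bar> \<le> B + \<bar>L\<bar> + 1) (at c)"
      using \<open>eventually (\<lambda>z. dist _ L < 1) _\<close> ev_u bd
    proof eventually_elim
      case (elim z)
      define x where "x = ln (cmod (z - c))"
      have 1: "\<bar>Q z - 2 * of_int e * x - L\<bar> < 1" using elim(1) by (simp add: dist_real_def x_def)
      have 2: "\<bar>Q z - 2 * real k * x\<bar> \<le> B" using elim(2,3) by (simp add: Q_def x_def)
      have "\<bar>2 * (of_int e - real k) * x\<bar> \<le> B + \<bar>L\<bar> + 1"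
      proof -
        have "2 * (of_int e - real k) * x = (Q z - 2 * real k * x) - (Q z - 2 * of_int e * x - L) - L"
          by (simp add: algebra_simps)
        then show ?thesis using 1 2 by linarith
      qed
      moreover have "\<bar>of_int e - real k\<bar> \<ge> 1" using ne by linarith
      ultimately have "\<bar>x\<bar> * 1 \<le> B + \<bar>L\<bar> + 1"
      proof -
        have "\<bar>x\<bar> * 1 \<le> \<bar>x\<bar> * \<bar>of_int e - real k\<bar>" by (rule mult_left_mono) (use \<open>\<bar>of_int e - real k\<bar> \<ge> 1\<close> in auto)
        also have "\<dots> \<le> \<bar>2 * (of_int e - real k) * x\<bar>"
          unfolding abs_mult by (simp add: mult_right_mono)
        finally show ?thesis using \<open>\<bar>2 * (of_int e - real k) * x\<bar> \<le> B + \<bar>L\<bar> + 1\<close> by linarith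
      qed
      then show ?case by (simp add: x_def)
    qed
    then show False by (rule ln_unbounded_at)
  qed
  show ?thesis using eL ek by (simp add: n_def even_diff)
qed

lemma deriv_shift_eq:
  fixes F G :: "complex \<Rightarrow> complex"
  assumes "eventually (\<lambda>z. F (z + w) = G z) (nhds z0)" "F field_differentiable at (z0 + w)"
  shows "deriv F (z0 + w) = deriv G z0"
proof -
  have "deriv G z0 = deriv (\<lambda>z. F (z + w)) z0"
    by (rule deriv_cong_ev) (use assms(1) in \<open>auto elim: eventually_mono\<close>)
  also have "(F has_field_derivative deriv F (z0 + w)) (at (z0 + w))"
    using assms(2) by (simp add: field_differentiable_derivI)
  then have "((\<lambda>z. F (z + w)) has_field_derivative deriv F (z0 + w)) (at z0)"
    using DERIV_shift[of F "deriv F (z0 + w)" z0 w] by simp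
  then have "deriv (\<lambda>z. F (z + w)) z0 = deriv F (z0 + w)"
    by (rule DERIV_imp_deriv)
  finally show ?thesis by simp
qed

lemma ev_not_pole:
  fixes g :: "complex \<Rightarrow> complex" and z0 :: complex
  assumes "g analytic_on {z0}"
  shows "eventually (\<lambda>z. g analytic_on {z}) (nhds z0)"
proof -
  from assms obtain s where "open s" "z0 \<in> s" "g holomorphic_on s" by (auto simp: analytic_at)
  then show ?thesis
    by (metis analytic_at eventually_nhds)
qed

lemma analytic_shift_nhds:
  fixes g :: "complex \<Rightarrow> complex" and z0 w :: complex
  assumes "g analytic_on {z0 + w}"
  shows "eventually (\<lambda>z. g analytic_on {z + w}) (nhds z0)"
proof -
  have "eventually (\<lambda>z. g analytic_on {z}) (nhds (z0 + w))" by (rule ev_not_pole[OF assms])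
  then obtain s where s: "open s" "z0 + w \<in> s" "\<And>z. z \<in> s \<Longrightarrow> g analytic_on {z}"
    by (auto simp: eventually_nhds)
  have "open ((\<lambda>z. z - w) ` s)" using s(1) by (simp add: open_translation_subtract)
  moreover have "z0 \<in> (\<lambda>z. z - w) ` s" using s(2) by (auto intro: image_eqI[of _ _ "z0 + w"])
  moreover have "\<And>z. z \<in> (\<lambda>z. z - w) ` s \<Longrightarrow> g analytic_on {z + w}" using s(3) by auto
  ultimately show ?thesis by (auto simp: eventually_nhds)
qed

lemma ident_w1:
  fixes g :: "complex \<Rightarrow> complex"
  assumes T: "\<And>z. g analytic_on {z} \<Longrightarrow> g analytic_on {z + w} \<Longrightarrow> g (z + w) = - g z"
    and a0: "g analytic_on {z0}" and a1: "g analytic_on {z0 + w}"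
  shows "deriv g (z0 + w) = - deriv g z0" "deriv (deriv g) (z0 + w) = - deriv (deriv g) z0"
proof -
  have ev: "eventually (\<lambda>z. g analytic_on {z} \<and> g analytic_on {z + w}) (nhds z0)"
    using ev_not_pole[OF a0] analytic_shift_nhds[OF a1] by (auto elim: eventually_elim2)
  have key: "deriv g (z + w) = - deriv g z" if "g analytic_on {z} \<and> g analytic_on {z + w}" for z
  proof -
    have "eventually (\<lambda>y. g analytic_on {y} \<and> g analytic_on {y + w}) (nhds z)"
      using ev_not_pole[of g z] analytic_shift_nhds[of g z w] that by (auto elim: eventually_elim2)
    then have "eventually (\<lambda>y. g (y + w) = - g y) (nhds z)" by (auto elim!: eventually_mono T)
    then have "deriv g (z + w) = deriv (\<lambda>y. - g y) z"
      by (rule deriv_shift_eq) (use that in \<open>auto intro: analytic_on_imp_differentiable_at\<close>)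
    also have "\<dots> = - deriv g z"
      by (rule deriv_minus) (use that in \<open>auto intro: analytic_on_imp_differentiable_at\<close>)
    finally show ?thesis .
  qed
  show "deriv g (z0 + w) = - deriv g z0" using key a0 a1 by blast
  have "eventually (\<lambda>z. eventually (\<lambda>z. g analytic_on {z} \<and> g analytic_on {z + w}) (nhds z)) (nhds z0)"
    using ev by (simp add: eventually_eventually)
  then have "eventually (\<lambda>z. deriv g (z + w) = - deriv g z) (nhds z0)"
    by (rule eventually_mono) (use key eventually_nhds_x_imp_x in blast)
  then have "deriv (deriv g) (z0 + w) = deriv (\<lambda>z. - deriv g z) z0"
    by (rule deriv_shift_eq) (use a1 in \<open>auto intro: analytic_on_imp_differentiable_at analytic_deriv\<close>)
  also have "\<dots> = - deriv (deriv g) z0"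
    by (rule deriv_minus) (use a0 in \<open>auto intro: analytic_on_imp_differentiable_at analytic_deriv\<close>)
  finally show "deriv (deriv g) (z0 + w) = - deriv (deriv g) z0" .
qed

lemma ev_nonzero_nhds:
  fixes g :: "complex \<Rightarrow> complex" and z0 :: complex
  assumes "isCont g z0" "g z0 \<noteq> 0"
  shows "eventually (\<lambda>z. g z \<noteq> 0) (nhds z0)"
proof -
  have "eventually (\<lambda>z. g z \<noteq> 0) (at z0)"
    using assms by (intro tendsto_imp_eventually_ne) (auto simp: isCont_def)
  then show ?thesis using assms(2) by (simp add: eventually_nhds_conv_at)
qed

lemma ident_w2:
  fixes g :: "complex \<Rightarrow> complex"
  assumes T: "\<And>z. g analytic_on {z} \<Longrightarrow> g analytic_on {z + w} \<Longrightarrow> g z \<noteq> 0 \<Longrightarrow> g (z + w) = 1 / g z"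
    and a0: "g analytic_on {z0}" and a1: "g analytic_on {z0 + w}" and nz: "g z0 \<noteq> 0"
  shows "deriv g (z0 + w) = - deriv g z0 / (g z0)\<^sup>2"
    "deriv (deriv g) (z0 + w) = 2 * (deriv g z0)\<^sup>2 / (g z0) ^ 3 - deriv (deriv g) z0 / (g z0)\<^sup>2"
proof -
  define P where "P = (\<lambda>z. g analytic_on {z} \<and> g analytic_on {z + w} \<and> g z \<noteq> 0)"
  have evP: "eventually P (nhds z)" if "P z" for z
  proof -
    have c: "isCont g z" using that by (auto simp: P_def intro: analytic_at_imp_isCont)
    have 1: "eventually (\<lambda>y. g analytic_on {y}) (nhds z)" by (rule ev_not_pole) (use that in \<open>simp add: P_def\<close>)
    have 2: "eventually (\<lambda>y. g analytic_on {y + w}) (nhds z)" by (rule analytic_shift_nhds) (use that in \<open>simp add: P_def\<close>)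
    have 3: "eventually (\<lambda>y. g y \<noteq> 0) (nhds z)" by (rule ev_nonzero_nhds[OF c]) (use that in \<open>simp add: P_def\<close>)
    show ?thesis using 1 2 3 unfolding P_def by eventually_elim auto
  qed
  have dg: "(g has_field_derivative deriv g z) (at z)" if "g analytic_on {z}" for z
    using field_differentiable_derivI[OF analytic_on_imp_differentiable_at[OF that]] by simp
  have key: "deriv g (z + w) = - deriv g z / (g z)\<^sup>2" if "P z" for z
  proof -
    have "eventually (\<lambda>y. g (y + w) = 1 / g y) (nhds z)"
      using evP[OF that] by (auto elim!: eventually_mono T simp: P_def)
    then have "deriv g (z + w) = deriv (\<lambda>y. 1 / g y) z"
      by (rule deriv_shift_eq) (use that in \<open>auto intro: analytic_on_imp_differentiable_at simp: P_def\<close>)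
    also have "((\<lambda>y. 1 / g y) has_field_derivative (- deriv g z / (g z)\<^sup>2)) (at z)"
      using dg[of z] that unfolding P_def
      by (auto intro!: derivative_eq_intros simp: power2_eq_square field_simps)
    then have "deriv (\<lambda>y. 1 / g y) z = - deriv g z / (g z)\<^sup>2" by (rule DERIV_imp_deriv)
    finally show ?thesis .
  qed
  have P0: "P z0" using a0 a1 nz by (simp add: P_def)
  show "deriv g (z0 + w) = - deriv g z0 / (g z0)\<^sup>2" using key[OF P0] .
  have "eventually (\<lambda>z. eventually P (nhds z)) (nhds z0)"
    using evP[OF P0] by (simp add: eventually_eventually)
  then have "eventually (\<lambda>z. deriv g (z + w) = - deriv g z / (g z)\<^sup>2) (nhds z0)"
    by (rule eventually_mono) (use key eventually_nhds_x_imp_x in blast)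
  then have "deriv (deriv g) (z0 + w) = deriv (\<lambda>z. - deriv g z / (g z)\<^sup>2) z0"
    by (rule deriv_shift_eq) (use a1 in \<open>auto intro: analytic_on_imp_differentiable_at analytic_deriv\<close>)
  also have "((\<lambda>z. - deriv g z / (g z)\<^sup>2) has_field_derivative
       (2 * (deriv g z0)\<^sup>2 / (g z0) ^ 3 - deriv (deriv g) z0 / (g z0)\<^sup>2)) (at z0)"
  proof -
    have d2: "(deriv g has_field_derivative deriv (deriv g) z0) (at z0)"
      using field_differentiable_derivI[OF analytic_on_imp_differentiable_at[OF analytic_deriv[OF a0]]] by simp
    show ?thesis
      using dg[OF a0] d2 nz
      by (auto intro!: derivative_eq_intros simp: power2_eq_square power3_eq_cube field_simps)
  qed
  then have "deriv (\<lambda>z. - deriv g z / (g z)\<^sup>2) z0 = 2 * (deriv g z0)\<^sup>2 / (g z0) ^ 3 - deriv (deriv g) z0 / (g z0)\<^sup>2"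
    by (rule DERIV_imp_deriv)
  finally show "deriv (deriv g) (z0 + w) = 2 * (deriv g z0)\<^sup>2 / (g z0) ^ 3 - deriv (deriv g) z0 / (g z0)\<^sup>2" .
qed

lemma lp_shift:
  fixes F :: "complex \<Rightarrow> complex"
  shows "contour_integral (linepath (p + w) (q + w)) F = contour_integral (linepath p q) (\<lambda>z. F (z + w))"
proof -
  have lp: "linepath (p + w) (q + w) t = linepath p q t + w" for t
    by (simp add: linepath_def algebra_simps scaleR_conv_of_real)
  have vd: "vector_derivative (linepath a b) (at t) = b - a" for a b :: complex and t
    by (rule vector_derivative_at) (rule has_vector_derivative_linepath_within)
  show ?thesis
    unfolding contour_integral_integral lp vd by simp
qed

lemma open_analytic_pts: "open {z. (g :: complex \<Rightarrow> complex) analytic_on {z}}"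
  unfolding open_subopen[of "{z. g analytic_on {z}}"]
proof
  fix z assume "z \<in> {z. g analytic_on {z}}"
  then obtain s where s: "open s" "z \<in> s" "g holomorphic_on s" by (auto simp: analytic_at)
  then have "s \<subseteq> {z. g analytic_on {z}}" using analytic_at by blast
  with s show "\<exists>T. open T \<and> z \<in> T \<and> T \<subseteq> {z. g analytic_on {z}}" by blast
qed

lemma log_integral:
  fixes g :: "complex \<Rightarrow> complex"
  assumes an: "\<And>z. z \<in> closed_segment p q \<Longrightarrow> g analytic_on {z} \<and> g z \<noteq> 0"
    and eq: "g q = - g p"
  shows "\<exists>k::int. contour_integral (linepath p q) (\<lambda>z. deriv g z / g z) = of_int (2 * k + 1) * of_real pi * \<i>"
proof -
  define A where "A = {z. g analytic_on {z}}"
  define \<gamma> where "\<gamma> = g \<circ> linepath p q"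
  have oA: "open A" unfolding A_def by (rule open_analytic_pts)
  have hA: "g holomorphic_on A" unfolding A_def
    using analytic_imp_holomorphic analytic_on_analytic_at by blast
  have vp: "valid_path \<gamma>" unfolding \<gamma>_def
    by (rule valid_path_compose_holomorphic[OF valid_path_linepath hA oA]) (use an in \<open>auto simp: A_def\<close>)
  then have pw: "\<gamma> piecewise_C1_differentiable_on {0..1}" by (simp add: valid_path_def)
  have nz: "0 \<notin> \<gamma> ` {0..1}"
  proof
    assume "0 \<in> \<gamma> ` {0..1}"
    then obtain t where t: "t \<in> {0..1}" "g (linepath p q t) = 0" by (auto simp: \<gamma>_def)
    have "linepath p q t \<in> closed_segment p q" using t(1) path_image_linepath[of p q] by (auto simp: path_image_def)
    then show False using an t(2) by blast
  qed
  have vd: "vector_derivative \<gamma> (at t) = (q - p) * deriv g (linepath p q t)" if "t \<in> {0..1}" for t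
  proof -
    have "linepath p q t \<in> closed_segment p q" using that path_image_linepath[of p q] by (auto simp: path_image_def)
    then have "g analytic_on {linepath p q t}" using an by blast
    then have "(g has_field_derivative deriv g (linepath p q t)) (at (linepath p q t))"
      using field_differentiable_derivI[OF analytic_on_imp_differentiable_at] by blast
    then have "(\<gamma> has_vector_derivative (q - p) * deriv g (linepath p q t)) (at t)"
      unfolding \<gamma>_def by (rule field_vector_diff_chain_at[OF has_vector_derivative_linepath_within])
    then show ?thesis by (rule vector_derivative_at)
  qed
  define I where "I = contour_integral (linepath p q) (\<lambda>z. deriv g z / g z)"
  have "integral {0..1} (\<lambda>x. vector_derivative \<gamma> (at x) / (\<gamma> x - 0)) = I"
    unfolding I_def contour_integral_integral
  proof (rule integral_cong)
    fix t :: real assume t: "t \<in> {0..1}"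
    have "vector_derivative (linepath p q) (at t) = q - p"
      by (rule vector_derivative_at) (rule has_vector_derivative_linepath_within)
    then show "vector_derivative \<gamma> (at t) / (\<gamma> t - 0) =
          deriv g (linepath p q t) / g (linepath p q t) * vector_derivative (linepath p q) (at t)"
      using vd[OF t] by (simp add: \<gamma>_def)
  qed
  with winding_number_exp_integral(2)[OF pw _ nz]
  have "exp (- I) * g q = g p" by (simp add: \<gamma>_def linepath_def)
  moreover have "g p \<noteq> 0" using an[of p] by auto
  ultimately have "g p * (exp (- I) + 1) = 0" using eq
    by (metis add.commute add_eq_0_iff distrib_left mult.commute mult_1 mult_minus_left)
  with \<open>g p \<noteq> 0\<close> have "exp (- I) + 1 = 0" by simp
  then have "exp (- I) = -1" using eq_neg_iff_add_eq_0[of "exp (- I)" 1] by simp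
  then have "exp I = -1"
  proof -
    assume h: "exp (- I) = -1"
    have "exp I = 1 / exp (- I)" by (simp add: exp_minus divide_inverse)
    also have "\<dots> = -1" using h by simp
    finally show ?thesis .
  qed
  then have "exp (I + pi * \<i>) = 1" by (simp add: exp_add)
  then obtain n :: int where "Re (I + pi * \<i>) = 0" "Im (I + pi * \<i>) = of_int (2 * n) * pi"
    by (auto simp: exp_eq_1)
  then have "I = of_int (2 * (n - 1) + 1) * of_real pi * \<i>"
    by (simp add: complex_eq_iff algebra_simps)
  then show ?thesis unfolding I_def by blast
qed

lemma join3:
  fixes H :: "complex \<Rightarrow> complex"
  assumes "continuous_on (closed_segment a b) H" "continuous_on (closed_segment b c) H"
    "continuous_on (closed_segment c d) H"
  shows "contour_integral (linepath a b +++ linepath b c +++ linepath c d) H =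
     contour_integral (linepath a b) H + contour_integral (linepath b c) H + contour_integral (linepath c d) H"
proof -
  have i: "H contour_integrable_on linepath a b" "H contour_integrable_on linepath b c"
    "H contour_integrable_on linepath c d"
    using assms by (auto intro: contour_integrable_continuous_linepath)
  have j: "H contour_integrable_on (linepath b c +++ linepath c d)"
    by (rule contour_integrable_joinI) (use i in auto)
  have "contour_integral (linepath a b +++ linepath b c +++ linepath c d) H =
        contour_integral (linepath a b) H + contour_integral (linepath b c +++ linepath c d) H"
    by (rule contour_integral_join) (use i j in auto)
  also have "contour_integral (linepath b c +++ linepath c d) H =
        contour_integral (linepath b c) H + contour_integral (linepath c d) H"
    by (rule contour_integral_join) (use i in auto)
  finally show ?thesis by simp
qed

lemma tri_sum:
  fixes H G :: "complex \<Rightarrow> complex" and a w1 w2 :: complex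
  assumes cab: "continuous_on (closed_segment a (a + w1)) H"
    and cbc: "continuous_on (closed_segment (a + w1) (a + w1 + w2)) H"
    and cca: "continuous_on (closed_segment (a + w1 + w2) a) H"
    and ccd: "continuous_on (closed_segment (a + w1 + w2) (a + w2)) H"
    and cda: "continuous_on (closed_segment (a + w2) a) H"
    and cG: "continuous_on (closed_segment a (a + w1)) G"
    and s1: "\<And>z. z \<in> closed_segment a (a + w2) \<Longrightarrow> H (z + w1) = H z"
    and s2: "\<And>z. z \<in> closed_segment a (a + w1) \<Longrightarrow> H (z + w2) = H z - 2 * G z"
  shows "contour_integral (linepath a (a + w1) +++ linepath (a + w1) (a + w1 + w2) +++ linepath (a + w1 + w2) a) H
       + contour_integral (linepath a (a + w1 + w2) +++ linepath (a + w1 + w2) (a + w2) +++ linepath (a + w2) a) H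
       = 2 * contour_integral (linepath a (a + w1)) G"
proof -
  define b c d where "b = a + w1" and "c = a + w1 + w2" and "d = a + w2"
  note defs = b_def c_def d_def
  have cac: "continuous_on (closed_segment a c) H" using cca by (simp add: closed_segment_commute c_def)
  have cad: "continuous_on (closed_segment a d) H" using cda by (simp add: closed_segment_commute d_def)
  have 1: "contour_integral (linepath a b +++ linepath b c +++ linepath c a) H =
     contour_integral (linepath a b) H + contour_integral (linepath b c) H + contour_integral (linepath c a) H"
    by (rule join3) (use cab cbc cca in \<open>simp_all add: defs\<close>)
  have 2: "contour_integral (linepath a c +++ linepath c d +++ linepath d a) H =
     contour_integral (linepath a c) H + contour_integral (linepath c d) H + contour_integral (linepath d a) H"
    by (rule join3) (use cac ccd cda in \<open>simp_all add: defs\<close>)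
  have 3: "contour_integral (linepath c a) H = - contour_integral (linepath a c) H"
    using cca by (intro contour_integral_reverse_linepath) (simp add: c_def)
  have 4: "contour_integral (linepath d a) H = - contour_integral (linepath a d) H"
    using cda by (intro contour_integral_reverse_linepath) (simp add: d_def)
  have 5: "contour_integral (linepath b c) H = contour_integral (linepath a d) H"
  proof -
    have "contour_integral (linepath b c) H = contour_integral (linepath (a + w1) (d + w1)) H"
      by (simp add: defs algebra_simps)
    also have "\<dots> = contour_integral (linepath a d) (\<lambda>z. H (z + w1))" by (rule lp_shift)
    also have "\<dots> = contour_integral (linepath a d) H"
      by (rule contour_integral_cong) (use s1 in \<open>auto simp: d_def\<close>)
    finally show ?thesis .
  qed
  have cHG: "continuous_on (closed_segment a b) (\<lambda>z. H z - 2 * G z)"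
    using cab cG by (auto intro!: continuous_intros simp: b_def)
  have 6: "contour_integral (linepath c d) H =
      - contour_integral (linepath a b) H + 2 * contour_integral (linepath a b) G"
  proof -
    have "contour_integral (linepath c d) H = contour_integral (linepath (b + w2) (a + w2)) H"
      by (simp add: defs algebra_simps)
    also have "\<dots> = contour_integral (linepath b a) (\<lambda>z. H (z + w2))" by (rule lp_shift)
    also have "\<dots> = contour_integral (linepath b a) (\<lambda>z. H z - 2 * G z)"
      by (rule contour_integral_cong) (use s2 in \<open>auto simp: b_def closed_segment_commute\<close>)
    also have "\<dots> = - contour_integral (linepath a b) (\<lambda>z. H z - 2 * G z)"
      using contour_integral_reverse_linepath[OF cHG] by simp
    also have "contour_integral (linepath a b) (\<lambda>z. H z - 2 * G z) =
        contour_integral (linepath a b) H - contour_integral (linepath a b) (\<lambda>z. 2 * G z)"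
      by (rule contour_integral_diff)
         (use cab cG in \<open>auto intro!: contour_integrable_continuous_linepath continuous_intros simp: b_def\<close>)
    also have "contour_integral (linepath a b) (\<lambda>z. 2 * G z) = 2 * contour_integral (linepath a b) G"
      by (rule contour_integral_lmul)
         (use cG in \<open>auto intro!: contour_integrable_continuous_linepath simp: b_def\<close>)
    finally show ?thesis by simp
  qed
  have "contour_integral (linepath a b +++ linepath b c +++ linepath c a) H +
        contour_integral (linepath a c +++ linepath c d +++ linepath d a) H = 2 * contour_integral (linepath a b) G"
    by (simp only: 1 2 3 4 5 6) (simp add: algebra_simps)
  then show ?thesis by (simp only: defs)
qed

lemma seg_coord:
  assumes "p \<in> closed_segment x y"
  shows "\<exists>u. 0 \<le> u \<and> u \<le> 1 \<and> cs w1 w2 (p - a) = (1 - u) * cs w1 w2 (x - a) + u * cs w1 w2 (y - a)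
            \<and> ct w1 w2 (p - a) = (1 - u) * ct w1 w2 (x - a) + u * ct w1 w2 (y - a)"
proof -
  from assms obtain u where u: "0 \<le> u" "u \<le> 1" "p = (1 - u) *\<^sub>R x + u *\<^sub>R y"
    by (auto simp: closed_segment_def)
  have e: "p - a = of_real (1 - u) * (x - a) + of_real u * (y - a)"
    using u(3) by (simp add: scaleR_conv_of_real algebra_simps)
  have "cs w1 w2 (p - a) = (1 - u) * cs w1 w2 (x - a) + u * cs w1 w2 (y - a)"
    unfolding e coord_add coord_scale ..
  moreover have "ct w1 w2 (p - a) = (1 - u) * ct w1 w2 (x - a) + u * ct w1 w2 (y - a)"
    unfolding e coord_add coord_scale ..
  ultimately show ?thesis using u(1,2) by blast
qed

lemma hull1_iff:
  assumes w: "Im (w2 / w1) \<noteq> 0"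
  shows "p \<in> convex hull {a, a + w1, a + w1 + w2} \<longleftrightarrow>
     0 \<le> ct w1 w2 (p - a) \<and> ct w1 w2 (p - a) \<le> cs w1 w2 (p - a) \<and> cs w1 w2 (p - a) \<le> 1"
proof
  assume "p \<in> convex hull {a, a + w1, a + w1 + w2}"
  then obtain u v t where uvt: "0 \<le> u" "0 \<le> v" "0 \<le> t" "u + v + t = 1"
    "p = u *\<^sub>R a + v *\<^sub>R (a + w1) + t *\<^sub>R (a + w1 + w2)"
    by (auto simp: convex_hull_3)
  have e: "p - a = of_real (v + t) * w1 + of_real t * w2"
  proof -
    have "p - a = (u + v + t) *\<^sub>R a - a + of_real (v + t) * w1 + of_real t * w2"
      using uvt(5) by (simp add: scaleR_conv_of_real algebra_simps)
    then show ?thesis using uvt(4) by simp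
  qed
  show "0 \<le> ct w1 w2 (p - a) \<and> ct w1 w2 (p - a) \<le> cs w1 w2 (p - a) \<and> cs w1 w2 (p - a) \<le> 1"
    unfolding e coord_of[OF w] using uvt by simp
next
  assume h: "0 \<le> ct w1 w2 (p - a) \<and> ct w1 w2 (p - a) \<le> cs w1 w2 (p - a) \<and> cs w1 w2 (p - a) \<le> 1"
  define s t where "s = cs w1 w2 (p - a)" and "t = ct w1 w2 (p - a)"
  have pe: "p = a + of_real s * w1 + of_real t * w2"
    using coord_decomp[OF w, of "p - a"] by (simp add: s_def t_def algebra_simps)
  have "p = (1 - s) *\<^sub>R a + (s - t) *\<^sub>R (a + w1) + t *\<^sub>R (a + w1 + w2)"
    unfolding pe by (simp add: scaleR_conv_of_real algebra_simps)
  then show "p \<in> convex hull {a, a + w1, a + w1 + w2}"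
    using h unfolding convex_hull_3 s_def[symmetric] t_def[symmetric]
    by (intro CollectI exI[of _ "1 - s"] exI[of _ "s - t"] exI[of _ t]) auto
qed

lemma hull2_iff:
  assumes w: "Im (w2 / w1) \<noteq> 0"
  shows "p \<in> convex hull {a, a + w1 + w2, a + w2} \<longleftrightarrow>
     0 \<le> cs w1 w2 (p - a) \<and> cs w1 w2 (p - a) \<le> ct w1 w2 (p - a) \<and> ct w1 w2 (p - a) \<le> 1"
proof
  assume "p \<in> convex hull {a, a + w1 + w2, a + w2}"
  then obtain u v t where uvt: "0 \<le> u" "0 \<le> v" "0 \<le> t" "u + v + t = 1"
    "p = u *\<^sub>R a + v *\<^sub>R (a + w1 + w2) + t *\<^sub>R (a + w2)"
    by (auto simp: convex_hull_3)
  have e: "p - a = of_real v * w1 + of_real (v + t) * w2"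
  proof -
    have "p - a = (u + v + t) *\<^sub>R a - a + of_real v * w1 + of_real (v + t) * w2"
      using uvt(5) by (simp add: scaleR_conv_of_real algebra_simps)
    then show ?thesis using uvt(4) by simp
  qed
  show "0 \<le> cs w1 w2 (p - a) \<and> cs w1 w2 (p - a) \<le> ct w1 w2 (p - a) \<and> ct w1 w2 (p - a) \<le> 1"
    unfolding e coord_of[OF w] using uvt by simp
next
  assume h: "0 \<le> cs w1 w2 (p - a) \<and> cs w1 w2 (p - a) \<le> ct w1 w2 (p - a) \<and> ct w1 w2 (p - a) \<le> 1"
  define s t where "s = cs w1 w2 (p - a)" and "t = ct w1 w2 (p - a)"
  have pe: "p = a + of_real s * w1 + of_real t * w2"
    using coord_decomp[OF w, of "p - a"] by (simp add: s_def t_def algebra_simps)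
  have "p = (1 - t) *\<^sub>R a + s *\<^sub>R (a + w1 + w2) + (t - s) *\<^sub>R (a + w2)"
    unfolding pe by (simp add: scaleR_conv_of_real algebra_simps)
  then show "p \<in> convex hull {a, a + w1 + w2, a + w2}"
    using h unfolding convex_hull_3 s_def[symmetric] t_def[symmetric]
    by (intro CollectI exI[of _ "1 - t"] exI[of _ s] exI[of _ "t - s"]) auto
qed

definition gen :: "complex \<Rightarrow> complex \<Rightarrow> complex \<Rightarrow> complex \<Rightarrow> bool" where
  "gen w1 w2 a p \<longleftrightarrow> cs w1 w2 (p - a) \<notin> \<int> \<and> ct w1 w2 (p - a) \<notin> \<int> \<and> cs w1 w2 (p - a) - ct w1 w2 (p - a) \<notin> \<int>"

lemma seg_cs_const:
  assumes "p \<in> closed_segment x y" "cs w1 w2 (x - a) = k" "cs w1 w2 (y - a) = k"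
  shows "cs w1 w2 (p - a) = k"
proof -
  obtain u where "cs w1 w2 (p - a) = (1 - u) * cs w1 w2 (x - a) + u * cs w1 w2 (y - a)"
    using seg_coord[OF assms(1), of w1 w2 a] by blast
  then show ?thesis using assms(2,3) by (simp add: algebra_simps)
qed

lemma seg_ct_const:
  assumes "p \<in> closed_segment x y" "ct w1 w2 (x - a) = k" "ct w1 w2 (y - a) = k"
  shows "ct w1 w2 (p - a) = k"
proof -
  obtain u where "ct w1 w2 (p - a) = (1 - u) * ct w1 w2 (x - a) + u * ct w1 w2 (y - a)"
    using seg_coord[OF assms(1), of w1 w2 a] by blast
  then show ?thesis using assms(2,3) by (simp add: algebra_simps)
qed

lemma seg_diag:
  assumes "p \<in> closed_segment x y" "cs w1 w2 (x - a) = ct w1 w2 (x - a)" "cs w1 w2 (y - a) = ct w1 w2 (y - a)"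
  shows "cs w1 w2 (p - a) - ct w1 w2 (p - a) = 0"
proof -
  obtain u where "cs w1 w2 (p - a) = (1 - u) * cs w1 w2 (x - a) + u * cs w1 w2 (y - a)"
      "ct w1 w2 (p - a) = (1 - u) * ct w1 w2 (x - a) + u * ct w1 w2 (y - a)"
    using seg_coord[OF assms(1), of w1 w2 a] by blast
  then show ?thesis using assms(2,3) by (simp add: algebra_simps)
qed

lemma vert_coords:
  assumes w: "Im (w2 / w1) \<noteq> 0"
  shows "cs w1 w2 (a - a) = 0" "ct w1 w2 (a - a) = 0"
    "cs w1 w2 (a + w1 - a) = 1" "ct w1 w2 (a + w1 - a) = 0"
    "cs w1 w2 (a + w2 - a) = 0" "ct w1 w2 (a + w2 - a) = 1"
    "cs w1 w2 (a + w1 + w2 - a) = 1" "ct w1 w2 (a + w1 + w2 - a) = 1"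
  using coord_w[OF w] coord_of[OF w, of 0 0] coord_add[of w1 w2 w1 w2]
  by (simp_all add: add.assoc)

lemma gen_not_on_segs:
  assumes w: "Im (w2 / w1) \<noteq> 0" and g: "gen w1 w2 a p"
  shows "p \<notin> closed_segment a (a + w1)" "p \<notin> closed_segment (a + w1) (a + w1 + w2)"
    "p \<notin> closed_segment (a + w1 + w2) a" "p \<notin> closed_segment (a + w1 + w2) (a + w2)"
    "p \<notin> closed_segment (a + w2) a"
proof -
  note v = vert_coords[OF w, of a]
  have z0: "(0::real) \<in> \<int>" and z1: "(1::real) \<in> \<int>" by simp_all
  show "p \<notin> closed_segment a (a + w1)"
    using seg_ct_const[of p a "a + w1" w1 w2 a 0] v g z0 by (auto simp: gen_def)
  show "p \<notin> closed_segment (a + w1) (a + w1 + w2)"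
    using seg_cs_const[of p "a + w1" "a + w1 + w2" w1 w2 a 1] v g z1 by (auto simp: gen_def)
  show "p \<notin> closed_segment (a + w1 + w2) a"
    using seg_diag[of p "a + w1 + w2" a w1 w2 a] v g z0 by (auto simp: gen_def)
  show "p \<notin> closed_segment (a + w1 + w2) (a + w2)"
    using seg_ct_const[of p "a + w1 + w2" "a + w2" w1 w2 a 1] v g z1 by (auto simp: gen_def)
  show "p \<notin> closed_segment (a + w2) a"
    using seg_cs_const[of p "a + w2" a w1 w2 a 0] v g z0 by (auto simp: gen_def)
qed

lemma wind_tri_gen:
  fixes A B C p :: complex
  assumes nA: "p \<notin> closed_segment A B" and nB: "p \<notin> closed_segment B C" and nC: "p \<notin> closed_segment C A"
  shows "\<exists>n::int. winding_number (linepath A B +++ linepath B C +++ linepath C A) p = of_int n \<and>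
            (odd n \<longleftrightarrow> p \<in> convex hull {A, B, C})"
proof (cases "p \<in> convex hull {A, B, C}")
  case True
  then have "p \<in> interior (convex hull {A, B, C})"
    using nA nB nC by (simp add: interior_of_triangle)
  from winding_number_triangle[OF this] True show ?thesis
    by (intro exI[of _ "if 0 < Im ((B - A) * cnj (B - p)) then 1 else - 1"]) auto
next
  case False
  have sub: "path_image (linepath A B +++ linepath B C +++ linepath C A) \<subseteq> convex hull {A, B, C}"
  proof -
    have "closed_segment A B \<subseteq> convex hull {A, B, C}" "closed_segment B C \<subseteq> convex hull {A, B, C}"
      "closed_segment C A \<subseteq> convex hull {A, B, C}"
      by (auto simp: segment_convex_hull intro!: hull_mono)
    then show ?thesis by (simp add: path_image_join)
  qed
  have "winding_number (linepath A B +++ linepath B C +++ linepath C A) p = 0"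
    by (rule winding_number_zero_outside[OF _ convex_convex_hull _ False sub]) auto
  then show ?thesis using False by (intro exI[of _ 0]) auto
qed

lemma wind1:
  assumes w: "Im (w2 / w1) \<noteq> 0" and g: "gen w1 w2 a p"
  shows "\<exists>n::int. winding_number (linepath a (a + w1) +++ linepath (a + w1) (a + w1 + w2) +++ linepath (a + w1 + w2) a) p = of_int n \<and>
            (odd n \<longleftrightarrow> 0 < ct w1 w2 (p - a) \<and> ct w1 w2 (p - a) < cs w1 w2 (p - a) \<and> cs w1 w2 (p - a) < 1)"
proof -
  note ns = gen_not_on_segs[OF w g]
  obtain n :: int where n: "winding_number (linepath a (a + w1) +++ linepath (a + w1) (a + w1 + w2) +++ linepath (a + w1 + w2) a) p = of_int n"
     "odd n \<longleftrightarrow> p \<in> convex hull {a, a + w1, a + w1 + w2}"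
    using wind_tri_gen[OF ns(1,2,3)] by blast
  have z0: "(0::real) \<in> \<int>" and z1: "(1::real) \<in> \<int>" by simp_all
  have "p \<in> convex hull {a, a + w1, a + w1 + w2} \<longleftrightarrow>
      0 < ct w1 w2 (p - a) \<and> ct w1 w2 (p - a) < cs w1 w2 (p - a) \<and> cs w1 w2 (p - a) < 1"
    unfolding hull1_iff[OF w] using g z0 z1 unfolding gen_def
    by (metis diff_self less_le)
  then show ?thesis using n by blast
qed

lemma wind2:
  assumes w: "Im (w2 / w1) \<noteq> 0" and g: "gen w1 w2 a p"
  shows "\<exists>n::int. winding_number (linepath a (a + w1 + w2) +++ linepath (a + w1 + w2) (a + w2) +++ linepath (a + w2) a) p = of_int n \<and>
            (odd n \<longleftrightarrow> 0 < cs w1 w2 (p - a) \<and> cs w1 w2 (p - a) < ct w1 w2 (p - a) \<and> ct w1 w2 (p - a) < 1)"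
proof -
  note ns = gen_not_on_segs[OF w g]
  have ns1: "p \<notin> closed_segment a (a + w1 + w2)" using ns(3) by (simp add: closed_segment_commute)
  obtain n :: int where n: "winding_number (linepath a (a + w1 + w2) +++ linepath (a + w1 + w2) (a + w2) +++ linepath (a + w2) a) p = of_int n"
     "odd n \<longleftrightarrow> p \<in> convex hull {a, a + w1 + w2, a + w2}"
    using wind_tri_gen[OF ns1 ns(4,5)] by blast
  have z0: "(0::real) \<in> \<int>" and z1: "(1::real) \<in> \<int>" by simp_all
  have "p \<in> convex hull {a, a + w1 + w2, a + w2} \<longleftrightarrow>
      0 < cs w1 w2 (p - a) \<and> cs w1 w2 (p - a) < ct w1 w2 (p - a) \<and> ct w1 w2 (p - a) < 1"
    unfolding hull2_iff[OF w] using g z0 z1 unfolding gen_def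
    by (metis diff_self less_le)
  then show ?thesis using n by blast
qed

lemma ev_at_nhds:
  fixes z :: complex
  assumes "eventually P (at z)"
  shows "eventually (\<lambda>x. eventually P (nhds x)) (at z)"
proof -
  from assms obtain d where d: "d > 0" "\<And>x. x \<noteq> z \<Longrightarrow> dist x z < d \<Longrightarrow> P x"
    by (auto simp: eventually_at)
  show ?thesis unfolding eventually_at
  proof (intro exI[of _ d] conjI ballI impI)
    fix x assume x: "x \<noteq> z \<and> dist x z < d"
    have "open (ball z d - {z})" by auto
    moreover have "x \<in> ball z d - {z}" using x by (auto simp: dist_commute)
    moreover have "\<forall>y\<in>ball z d - {z}. P y" using d by (auto simp: dist_commute)
    ultimately show "eventually P (nhds x)" unfolding eventually_nhds by blast
  qed (use d in auto)
qed

lemma isCont_shift: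
  fixes g :: "complex \<Rightarrow> complex"
  assumes "isCont g (z + w)"
  shows "isCont (\<lambda>x. g (x + w)) z"
proof -
  have "isCont (\<lambda>x. x + w) z" by (intro continuous_intros)
  from isCont_o2[OF this, of g] assms show ?thesis by simp
qed

lemma coord_lat:
  assumes w: "Im (w2 / w1) \<noteq> 0"
  shows "cs w1 w2 (z + of_int m * w1 + of_int n * w2) = cs w1 w2 z + of_int m"
    "ct w1 w2 (z + of_int m * w1 + of_int n * w2) = ct w1 w2 z + of_int n"
proof -
  have e: "z + of_int m * w1 + of_int n * w2 = z + (of_real (of_int m) * w1 + of_real (of_int n) * w2)"
    by simp
  show "cs w1 w2 (z + of_int m * w1 + of_int n * w2) = cs w1 w2 z + of_int m"
    by (subst e, subst coord_add(1), subst coord_of[OF w]) (rule refl)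
  show "ct w1 w2 (z + of_int m * w1 + of_int n * w2) = ct w1 w2 z + of_int n"
    by (subst e, subst coord_add(2), subst coord_of[OF w]) (rule refl)
qed

lemma par_aux:
  fixes s t :: real
  assumes "s - t \<noteq> 0"
  shows "((0 < t \<and> t < s \<and> s < 1) \<noteq> (0 < s \<and> s < t \<and> t < 1)) \<longleftrightarrow> (0 < s \<and> s < 1 \<and> 0 < t \<and> t < 1)"
  using assms by auto

theorem proposition4p5:
  fixes w1 w2 :: complex and N :: nat and p :: "nat \<Rightarrow> complex" and l :: "nat \<Rightarrow> nat"
    and u :: "complex \<Rightarrow> real"
  assumes "Im (w2 / w1) \<noteq> 0"
    and "N \<ge> 1"
    and "\<forall>i<N. \<forall>j<N. i \<noteq> j \<longrightarrow> p i - p j \<notin> lattice w1 w2"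
    and "\<forall>i<N. l i \<ge> 1"
    and "even (\<Sum>i<N. l i)"
    and "liouville_solution w1 w2 N p l u"
  shows "\<not> (\<exists>f. developing_map f u \<and> type_I_map w1 w2 f)"
proof
  note w = assms(1)
  assume "\<exists>f. developing_map f u \<and> type_I_map w1 w2 f"
  then obtain f where dev: "developing_map f u" and tI: "type_I_map w1 w2 f" by blast
  have cs_at: "eventually P (at z)" if "eventually P (cosparse UNIV)" for P and z :: complex
    using eventually_cosparse_imp_eventually_at[OF that, of z UNIV] by simp
  define S where "S = {p i + w | i w. i < N \<and> w \<in> lattice w1 w2}"
  have per: "\<forall>z. u (z + w1) = u z \<and> u (z + w2) = u z" and C2: "C2_on (- S) u"
    and sing: "\<forall>i<N. \<exists>r>0. \<exists>B. \<forall>z. 0 < cmod (z - p i) \<and> cmod (z - p i) < r \<longrightarrow>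
            \<bar>u z - 2 * real (l i) * ln (cmod (z - p i))\<bar> \<le> B"
    using assms(6) unfolding liouville_solution_def Let_def S_def by blast+
  have ucont: "isCont u z" if "z \<notin> S" for z
  proof -
    from C2 obtain Du :: "complex \<Rightarrow> complex \<Rightarrow>\<^sub>L real"
      where "\<forall>z\<in>-S. (u has_derivative blinfun_apply (Du z)) (at z)"
      unfolding C2_on_def by blast
    then show ?thesis using that has_derivative_continuous by blast
  qed
  have fmero: "f meromorphic_on UNIV"
    and devE: "\<forall>\<^sub>\<approx>z. u z = ln (8 * (cmod (deriv f z))\<^sup>2 / (1 + (cmod (f z))\<^sup>2)\<^sup>2)"
    using dev unfolding developing_map_def by auto
  define g where "g = remove_sings f"
  have nm: "g nicely_meromorphic_on UNIV" unfolding g_def by (rule remove_sings_nicely_meromorphic[OF fmero])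
  have gmero: "g meromorphic_on UNIV" using nm by (simp add: nicely_meromorphic_on_def)
  have iso: "isolated_singularity_at f z" for z using fmero by (auto simp: meromorphic_on_altdef)
  have evg: "eventually (\<lambda>x. g x = f x) (at z)" for z
    unfolding g_def by (rule eventually_remove_sings_eq_at[OF iso])
  have evdg: "eventually (\<lambda>x. deriv g x = deriv f x) (at z)" for z
    using ev_at_nhds[OF evg[of z]] by eventually_elim (rule deriv_cong_ev, auto)
  have evu: "eventually (\<lambda>x. u x = ln (8 * (cmod (deriv g x))\<^sup>2 / (1 + (cmod (g x))\<^sup>2)\<^sup>2)) (at z)" for z
    using cs_at[OF devE, of z] evg[of z] evdg[of z]
    by eventually_elim simp
  have T1: "g (z + w1) = - g z" if "g analytic_on {z}" "g analytic_on {z + w1}" for z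
  proof -
    have "eventually (\<lambda>x. f (x + w1) = - f x) (at z)"
      using tI unfolding type_I_map_def by (auto intro: cs_at)
    moreover have "eventually (\<lambda>x. g (x + w1) = f (x + w1)) (at z)" by (rule ev_shift) (rule evg)
    ultimately have "eventually (\<lambda>x. g (x + w1) + g x = 0) (at z)"
      using evg[of z] by eventually_elim simp
    moreover have "isCont (\<lambda>x. g (x + w1) + g x) z"
      using that by (intro continuous_intros isCont_shift) (auto intro: analytic_at_imp_isCont)
    ultimately have "(\<lambda>x. g (x + w1) + g x) z = 0" by (intro isCont_ev_zero)
    then show ?thesis by (simp add: eq_neg_iff_add_eq_0)
  qed
  have T2: "g (z + w2) = 1 / g z" if "g analytic_on {z}" "g analytic_on {z + w2}" "g z \<noteq> 0" for z
  proof -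
    have "eventually (\<lambda>x. f (x + w2) = 1 / f x) (at z)"
      using tI unfolding type_I_map_def by (auto intro: cs_at)
    moreover have "eventually (\<lambda>x. g (x + w2) = f (x + w2)) (at z)" by (rule ev_shift) (rule evg)
    ultimately have "eventually (\<lambda>x. g (x + w2) - 1 / g x = 0) (at z)"
      using evg[of z] by eventually_elim simp
    moreover have "isCont (\<lambda>x. g (x + w2) - 1 / g x) z"
      using that by (intro continuous_intros isCont_shift) (auto intro: analytic_at_imp_isCont)
    ultimately have "(\<lambda>x. g (x + w2) - 1 / g x) z = 0" by (intro isCont_ev_zero)
    then show ?thesis by simp
  qed
  have nzD: "\<forall>\<^sub>\<approx>z. deriv g z \<noteq> 0"
  proof -
    have "deriv g meromorphic_on UNIV" by (rule meromorphic_on_deriv[OF gmero])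
    then have "(\<forall>\<^sub>\<approx>z. deriv g z = 0) \<or> (\<forall>\<^sub>\<approx>z. deriv g z \<noteq> 0)"
      by (rule meromorphic_imp_constant_or_avoid) auto
    moreover have "\<not> (\<forall>\<^sub>\<approx>z. deriv g z = 0)"
    proof
      assume h: "\<forall>\<^sub>\<approx>z. deriv g z = 0"
      have l0: "l 0 \<ge> 1" and i0: "0 < N" using assms(2,4) by auto
      from sing i0 obtain r B where r: "r > 0" and rB: "\<forall>z. 0 < cmod (z - p 0) \<and> cmod (z - p 0) < r \<longrightarrow>
            \<bar>u z - 2 * real (l 0) * ln (cmod (z - p 0))\<bar> \<le> B" by blast
      have er: "eventually (\<lambda>z. 0 < cmod (z - p 0) \<and> cmod (z - p 0) < r) (at (p 0))"
        unfolding eventually_at using r by (intro exI[of _ r]) (auto simp: dist_norm)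
      have "eventually (\<lambda>z. \<bar>ln (cmod (z - p 0))\<bar> \<le> B) (at (p 0))"
        using er evu[of "p 0"] cs_at[OF h, of "p 0"]
      proof eventually_elim
        case (elim z)
        then have "u z = 0" by simp
        with rB elim(1) have "\<bar>2 * real (l 0) * ln (cmod (z - p 0))\<bar> \<le> B" by auto
        moreover have "\<bar>ln (cmod (z - p 0))\<bar> \<le> \<bar>2 * real (l 0) * ln (cmod (z - p 0))\<bar>"
        proof -
          have "1 * \<bar>ln (cmod (z - p 0))\<bar> \<le> (2 * real (l 0)) * \<bar>ln (cmod (z - p 0))\<bar>"
            by (rule mult_right_mono) (use l0 in auto)
          then show ?thesis by (simp add: abs_mult)
        qed
        ultimately show ?case by linarith
      qed
      then show False by (rule ln_unbounded_at)
    qed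
    ultimately show ?thesis by blast
  qed
  have nzg: "\<forall>\<^sub>\<approx>z. g z \<noteq> 0"
  proof -
    have "(\<forall>x\<in>UNIV. g x = 0) \<or> (\<forall>\<^sub>\<approx>x\<in>UNIV. g x \<noteq> 0)"
      by (rule nicely_meromorphic_imp_constant_or_avoid[OF nm]) auto
    moreover have "\<not> (\<forall>x. g x = 0)"
    proof
      assume "\<forall>x. g x = 0"
      then have "g = (\<lambda>_. 0)" by auto
      then have "\<forall>z. deriv g z = 0" by simp
      then have "eventually (\<lambda>z::complex. False) (cosparse UNIV)"
        using nzD by (auto elim: eventually_mono)
      then have "cosparse (UNIV :: complex set) = bot" by (simp add: eventually_False)
      then show False using cosparse_eq_bot_iff'[of "UNIV :: complex set"] by simp
    qed
    ultimately show ?thesis by blast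
  qed
  define Z0 where "Z0 = {z. is_pole g z \<or> g z = 0 \<or> deriv g z = 0}"
  have "\<forall>\<^sub>\<approx>z. \<not> is_pole g z" by (rule meromorphic_on_imp_not_pole_cosparse[OF gmero])
  with nzg nzD have "\<forall>\<^sub>\<approx>z. z \<notin> Z0" by eventually_elim (auto simp: Z0_def)
  then have Z0sp: "Z0 sparse_in UNIV" by (simp add: eventually_cosparse)
  define v where "v = w1 - w2"
  define R where "R = norm v + norm w1 + norm w2 + 1"
  define F where "F = Z0 \<inter> cball 0 R"
  have finF: "finite F"
    using sparse_in_compact_finite[OF sparse_in_subset[OF Z0sp, of "cball 0 R"]] by (auto simp: F_def Int_commute)
  have cntS: "countable S"
  proof -
    have "S \<subseteq> (\<lambda>(i, m, n). p i + of_int m * w1 + of_int n * w2) ` (UNIV \<times> (UNIV :: int set) \<times> (UNIV :: int set))"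
    proof
      fix z assume "z \<in> S"
      then obtain i m n where "z = p i + (of_int m * w1 + of_int n * w2)"
        unfolding S_def lattice_def by blast
      then show "z \<in> (\<lambda>(i, m, n). p i + of_int m * w1 + of_int n * w2) ` (UNIV \<times> (UNIV :: int set) \<times> (UNIV :: int set))"
        by (intro image_eqI[of _ _ "(i, m, n)"]) (auto simp: add.assoc)
    qed
    then show ?thesis by (rule countable_subset) auto
  qed
  define X where "X = F \<union> S"
  have cntX: "countable X" using finF cntS by (simp add: X_def countable_finite)
  define Bad where "Bad = (\<Union>b\<in>X. range (\<lambda>n::int. cs w1 w2 b - of_int n) \<union> range (\<lambda>n::int. of_int n - ct w1 w2 b)
      \<union> range (\<lambda>n::int. (cs w1 w2 b - ct w1 w2 b - of_int n) / 2))"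
  have "countable Bad" unfolding Bad_def using cntX by auto
  then obtain x where x: "x \<in> {0..1}" "x \<notin> Bad"
  proof -
    have "\<not> {0..1::real} \<subseteq> Bad"
      using uncountable_closed_interval[of "0::real" 1] countable_subset \<open>countable Bad\<close> by auto
    then show thesis using that by blast
  qed
  define a where "a = of_real x * v"
  have csv: "cs w1 w2 v = 1" "ct w1 w2 v = -1" using coord_w[OF w] by (simp_all add: v_def coord_diff)
  have gX: "gen w1 w2 a b" if "b \<in> X" for b
  proof -
    have e1: "cs w1 w2 (b - a) = cs w1 w2 b - x" and e2: "ct w1 w2 (b - a) = ct w1 w2 b + x"
      by (simp_all add: a_def coord_diff coord_scale csv)
    show ?thesis unfolding gen_def e1 e2
    proof (intro conjI notI)
      assume "cs w1 w2 b - x \<in> \<int>"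
      then obtain n where "cs w1 w2 b - x = of_int n" by (auto elim: Ints_cases)
      then have "x = cs w1 w2 b - of_int n" by simp
      then have "x \<in> Bad" unfolding Bad_def using that by blast
      then show False using x by blast
    next
      assume "ct w1 w2 b + x \<in> \<int>"
      then obtain n where "ct w1 w2 b + x = of_int n" by (auto elim: Ints_cases)
      then have "x = of_int n - ct w1 w2 b" by simp
      then have "x \<in> Bad" unfolding Bad_def using that by blast
      then show False using x by blast
    next
      assume "cs w1 w2 b - x - (ct w1 w2 b + x) \<in> \<int>"
      then obtain n where "cs w1 w2 b - x - (ct w1 w2 b + x) = of_int n" by (auto elim: Ints_cases)
      then have "x = (cs w1 w2 b - ct w1 w2 b - of_int n) / 2" by simp
      then have "x \<in> Bad" unfolding Bad_def using that by blast
      then show False using x by blast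
    qed
  qed
  define Pc where "Pc = {z. 0 \<le> cs w1 w2 (z - a) \<and> cs w1 w2 (z - a) \<le> 1 \<and> 0 \<le> ct w1 w2 (z - a) \<and> ct w1 w2 (z - a) \<le> 1}"
  have Pc_ball: "norm z < R" if "z \<in> Pc" for z
  proof -
    define s t where "s = cs w1 w2 (z - a)" and "t = ct w1 w2 (z - a)"
    have st: "0 \<le> s" "s \<le> 1" "0 \<le> t" "t \<le> 1" using that by (auto simp: Pc_def s_def t_def)
    have ze: "z = a + of_real s * w1 + of_real t * w2"
      using coord_decomp[OF w, of "z - a"] by (simp add: s_def t_def algebra_simps)
    have "norm z \<le> norm a + norm (of_real s * w1) + norm (of_real t * w2)"
      unfolding ze by (meson add_mono norm_triangle_ineq order_trans order_refl)
    also have "norm a \<le> norm v" using x by (simp add: a_def norm_mult mult_left_le_one_le)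
    also have "norm (of_real s * w1) \<le> norm w1" using st by (simp add: norm_mult mult_left_le_one_le)
    also have "norm (of_real t * w2) \<le> norm w2" using st by (simp add: norm_mult mult_left_le_one_le)
    finally show ?thesis by (simp add: R_def)
  qed
  have Pc_seg: "closed_segment y1 y2 \<subseteq> Pc" if "y1 \<in> Pc" "y2 \<in> Pc" for y1 y2
  proof
    fix z assume "z \<in> closed_segment y1 y2"
    from seg_coord[OF this, of w1 w2 a] obtain u where u: "0 \<le> u" "u \<le> 1"
      "cs w1 w2 (z - a) = (1 - u) * cs w1 w2 (y1 - a) + u * cs w1 w2 (y2 - a)"
      "ct w1 w2 (z - a) = (1 - u) * ct w1 w2 (y1 - a) + u * ct w1 w2 (y2 - a)" by blast
    show "z \<in> Pc" unfolding Pc_def using that u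
      by (auto simp: Pc_def intro!: convex_bound_le[of _ 1 _ "1 - u" u] add_nonneg_nonneg mult_nonneg_nonneg)
  qed
  note vc = vert_coords[OF w, of a]
  have verts: "a \<in> Pc" "a + w1 \<in> Pc" "a + w2 \<in> Pc" "a + w1 + w2 \<in> Pc" using vc by (auto simp: Pc_def)
  define segs where "segs = closed_segment a (a + w1) \<union> closed_segment (a + w1) (a + w1 + w2) \<union>
      closed_segment (a + w1 + w2) a \<union> closed_segment (a + w1 + w2) (a + w2) \<union> closed_segment (a + w2) a"
  have segs_Pc: "segs \<subseteq> Pc" unfolding segs_def using Pc_seg verts by blast
  have good: "g analytic_on {z} \<and> g z \<noteq> 0 \<and> deriv g z \<noteq> 0 \<and> norm z < R" if "z \<in> segs" for z
  proof -
    have zP: "z \<in> Pc" using that segs_Pc by blast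
    have "z \<notin> Z0"
    proof
      assume "z \<in> Z0"
      then have "z \<in> X" using Pc_ball[OF zP] by (auto simp: X_def F_def)
      from gen_not_on_segs[OF w gX[OF this]] that show False by (auto simp: segs_def)
    qed
    then show ?thesis using Pc_ball[OF zP] nm
      by (auto simp: Z0_def intro: nicely_meromorphic_on_imp_analytic_at)
  qed
  define H where "H = (\<lambda>z. deriv (deriv g) z / deriv g z)"
  define G where "G = (\<lambda>z. deriv g z / g z)"
  have contHG: "isCont H z \<and> isCont G z" if "z \<in> segs" for z
  proof -
    from good[OF that] have an: "g analytic_on {z}" and nz: "g z \<noteq> 0" "deriv g z \<noteq> 0" by auto
    have a1: "deriv g analytic_on {z}" using an by (rule analytic_deriv)
    have a2: "deriv (deriv g) analytic_on {z}" using a1 by (rule analytic_deriv)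
    have c: "isCont g z" "isCont (deriv g) z" "isCont (deriv (deriv g)) z"
      using an a1 a2 by (auto intro: analytic_at_imp_isCont)
    show ?thesis unfolding H_def G_def using c nz
      by (auto intro!: continuous_intros)
  qed
  have contH: "continuous_on s H" "continuous_on s G" if "s \<subseteq> segs" for s
    using contHG that by (auto intro!: continuous_at_imp_continuous_on)
  have segs_sub: "closed_segment a (a + w1) \<subseteq> segs" "closed_segment (a + w1) (a + w1 + w2) \<subseteq> segs"
      "closed_segment (a + w1 + w2) a \<subseteq> segs" "closed_segment (a + w1 + w2) (a + w2) \<subseteq> segs"
      "closed_segment (a + w2) a \<subseteq> segs"
    by (auto simp: segs_def)
  have tr1: "z + w1 \<in> closed_segment (a + w1) (a + w1 + w2)" if "z \<in> closed_segment a (a + w2)" for z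
  proof -
    have "z + w1 \<in> (+) w1 ` closed_segment a (a + w2)" using that by (auto simp: add.commute)
    also have "\<dots> = closed_segment (w1 + a) (w1 + (a + w2))" by (simp add: closed_segment_translation)
    finally show ?thesis by (simp add: algebra_simps)
  qed
  have tr2: "z + w2 \<in> closed_segment (a + w1 + w2) (a + w2)" if "z \<in> closed_segment a (a + w1)" for z
  proof -
    have "z + w2 \<in> (+) w2 ` closed_segment a (a + w1)" using that by (auto simp: add.commute)
    also have "\<dots> = closed_segment (w2 + a) (w2 + (a + w1))" by (simp add: closed_segment_translation)
    finally show ?thesis by (simp add: algebra_simps closed_segment_commute)
  qed
  have s1: "H (z + w1) = H z" if "z \<in> closed_segment a (a + w2)" for z
  proof -
    have z: "z \<in> segs" using that segs_sub(5) by (auto simp: closed_segment_commute)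
    have z1: "z + w1 \<in> segs" using tr1[OF that] segs_sub(2) by blast
    have "deriv g (z + w1) = - deriv g z" "deriv (deriv g) (z + w1) = - deriv (deriv g) z"
      by (rule ident_w1[of g w1 z]; (use T1 good[OF z] good[OF z1] in auto))+
    then show ?thesis by (simp add: H_def)
  qed
  have s2: "H (z + w2) = H z - 2 * G z" if "z \<in> closed_segment a (a + w1)" for z
  proof -
    have z: "z \<in> segs" using that segs_sub(1) by blast
    have z2: "z + w2 \<in> segs" using tr2[OF that] segs_sub(4) by blast
    have d1: "deriv g (z + w2) = - deriv g z / (g z)\<^sup>2"
      and d2: "deriv (deriv g) (z + w2) = 2 * (deriv g z)\<^sup>2 / (g z) ^ 3 - deriv (deriv g) z / (g z)\<^sup>2"
      by (rule ident_w2[of g w2 z]; (use T2 good[OF z] good[OF z2] in auto))+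
    have nz: "g z \<noteq> 0" "deriv g z \<noteq> 0" using good[OF z] by auto
    show ?thesis unfolding H_def G_def d1 d2 using nz
      by (simp add: field_simps power2_eq_square power3_eq_cube)
  qed
  have tri: "contour_integral (linepath a (a + w1) +++ linepath (a + w1) (a + w1 + w2) +++ linepath (a + w1 + w2) a) H
       + contour_integral (linepath a (a + w1 + w2) +++ linepath (a + w1 + w2) (a + w2) +++ linepath (a + w2) a) H
       = 2 * contour_integral (linepath a (a + w1)) G"
    by (rule tri_sum) (use contH segs_sub s1 s2 in auto)
  obtain k :: int where k: "contour_integral (linepath a (a + w1)) G = of_int (2 * k + 1) * of_real pi * \<i>"
  proof -
    have "\<exists>k::int. contour_integral (linepath a (a + w1)) (\<lambda>z. deriv g z / g z) = of_int (2 * k + 1) * of_real pi * \<i>"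
    proof (rule log_integral)
      show "g analytic_on {z} \<and> g z \<noteq> 0" if "z \<in> closed_segment a (a + w1)" for z
        using good that segs_sub(1) by blast
      have "a \<in> segs" "a + w1 \<in> segs" by (auto simp: segs_def)
      then show "g (a + w1) = - g a" using T1 good by blast
    qed
    then show thesis using that by (auto simp: G_def)
  qed
  define pz where "pz = {w \<in> ball 0 R. deriv g w = 0 \<or> w \<in> {z. is_pole g z}}"
  have pzF: "pz \<subseteq> F" unfolding pz_def F_def Z0_def by auto
  have finpz: "finite pz" using finF pzF finite_subset by blast
  have pz_gen: "gen w1 w2 a q" if "q \<in> pz" for q using gX pzF that X_def by blast
  have AP: "contour_integral \<gamma> H = 2 * pi * \<i> * (\<Sum>q\<in>pz. winding_number \<gamma> q * of_int (zorder (deriv g) q))"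
    if vp: "valid_path \<gamma>" and lp: "pathfinish \<gamma> = pathstart \<gamma>" and pim: "path_image \<gamma> \<subseteq> segs" for \<gamma>
  proof -
    have "contour_integral \<gamma> (\<lambda>x. deriv (deriv g) x * 1 / deriv g x) =
        2 * pi * \<i> * (\<Sum>q\<in>pz. winding_number \<gamma> q * 1 * zorder (deriv g) q)"
      unfolding pz_def
    proof (rule argument_principle)
      show "open (ball (0::complex) R)" "connected (ball (0::complex) R)" by auto
      have "\<forall>z\<in>ball 0 R - {z. is_pole g z}. deriv g analytic_on {z}"
      proof
        fix z assume "z \<in> ball 0 R - {z. is_pole g z}"
        then have "\<not> is_pole g z" by simp
        then have "g analytic_on {z}" using nicely_meromorphic_on_imp_analytic_at[OF nm, of z] by simp
        then show "deriv g analytic_on {z}" by (rule analytic_deriv)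
      qed
      then have "deriv g analytic_on (ball 0 R - {z. is_pole g z})"
        using analytic_on_analytic_at[of "deriv g" "ball 0 R - {z. is_pole g z}"] by blast
      then show "deriv g holomorphic_on ball 0 R - {z. is_pole g z}" by (rule analytic_imp_holomorphic)
      show "(\<lambda>_. 1) holomorphic_on ball 0 R" by simp
      show "valid_path \<gamma>" "pathfinish \<gamma> = pathstart \<gamma>" by fact+
      show "path_image \<gamma> \<subseteq> ball 0 R - {w \<in> ball 0 R. deriv g w = 0 \<or> w \<in> {z. is_pole g z}}"
      proof
        fix z assume "z \<in> path_image \<gamma>"
        then have "z \<in> segs" using pim by blast
        from good[OF this] have "g analytic_on {z}" "deriv g z \<noteq> 0" "norm z < R" by auto
        moreover from this(1) have "\<not> is_pole g z" by (rule analytic_at_imp_no_pole)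
        ultimately show "z \<in> ball 0 R - {w \<in> ball 0 R. deriv g w = 0 \<or> w \<in> {z. is_pole g z}}" by auto
      qed
      show "\<forall>z. z \<notin> ball 0 R \<longrightarrow> winding_number \<gamma> z = 0"
      proof (intro allI impI)
        fix z :: complex assume "z \<notin> ball 0 R"
        moreover have "path_image \<gamma> \<subseteq> ball 0 R"
        proof
          fix y assume "y \<in> path_image \<gamma>"
          then have "y \<in> segs" using pim by blast
          from good[OF this] show "y \<in> ball 0 R" by simp
        qed
        ultimately show "winding_number \<gamma> z = 0"
          by (intro winding_number_zero_outside[of \<gamma> "ball 0 R"]) (auto intro: valid_path_imp_path vp lp)
      qed
      show "finite {w \<in> ball 0 R. deriv g w = 0 \<or> w \<in> {z. is_pole g z}}" using finpz by (simp add: pz_def)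
      show "\<forall>q\<in>ball 0 R \<inter> {z. is_pole g z}. is_pole (deriv g) q"
      proof
        fix q assume "q \<in> ball 0 R \<inter> {z. is_pole g z}"
        moreover have "isolated_singularity_at g q" using gmero by (auto simp: meromorphic_on_altdef)
        ultimately show "is_pole (deriv g) q" using is_pole_deriv[of g q] by simp
      qed
    qed
    then show ?thesis by (simp add: H_def)
  qed
  define \<gamma>1 where "\<gamma>1 = linepath a (a + w1) +++ linepath (a + w1) (a + w1 + w2) +++ linepath (a + w1 + w2) a"
  define \<gamma>2 where "\<gamma>2 = linepath a (a + w1 + w2) +++ linepath (a + w1 + w2) (a + w2) +++ linepath (a + w2) a"
  have AP1: "contour_integral \<gamma>1 H = 2 * pi * \<i> * (\<Sum>q\<in>pz. winding_number \<gamma>1 q * of_int (zorder (deriv g) q))"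
    by (rule AP) (auto simp: \<gamma>1_def path_image_join segs_def)
  have AP2: "contour_integral \<gamma>2 H = 2 * pi * \<i> * (\<Sum>q\<in>pz. winding_number \<gamma>2 q * of_int (zorder (deriv g) q))"
    by (rule AP) (auto simp: \<gamma>2_def path_image_join segs_def closed_segment_commute)
  have "\<forall>q\<in>pz. \<exists>n::int. winding_number \<gamma>1 q = of_int n \<and>
     (odd n \<longleftrightarrow> 0 < ct w1 w2 (q - a) \<and> ct w1 w2 (q - a) < cs w1 w2 (q - a) \<and> cs w1 w2 (q - a) < 1)"
    using wind1[OF w pz_gen] unfolding \<gamma>1_def by blast
  then obtain n1 where n1: "\<And>q. q \<in> pz \<Longrightarrow> winding_number \<gamma>1 q = of_int (n1 q) \<and>
     (odd (n1 q) \<longleftrightarrow> 0 < ct w1 w2 (q - a) \<and> ct w1 w2 (q - a) < cs w1 w2 (q - a) \<and> cs w1 w2 (q - a) < 1)"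
    by metis
  have "\<forall>q\<in>pz. \<exists>n::int. winding_number \<gamma>2 q = of_int n \<and>
     (odd n \<longleftrightarrow> 0 < cs w1 w2 (q - a) \<and> cs w1 w2 (q - a) < ct w1 w2 (q - a) \<and> ct w1 w2 (q - a) < 1)"
    using wind2[OF w pz_gen] unfolding \<gamma>2_def by blast
  then obtain n2 where n2: "\<And>q. q \<in> pz \<Longrightarrow> winding_number \<gamma>2 q = of_int (n2 q) \<and>
     (odd (n2 q) \<longleftrightarrow> 0 < cs w1 w2 (q - a) \<and> cs w1 w2 (q - a) < ct w1 w2 (q - a) \<and> ct w1 w2 (q - a) < 1)"
    by metis
  define Z where "Z = (\<lambda>q. zorder (deriv g) q)"
  have "2 * pi * \<i> * (\<Sum>q\<in>pz. winding_number \<gamma>1 q * of_int (Z q)) +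
        2 * pi * \<i> * (\<Sum>q\<in>pz. winding_number \<gamma>2 q * of_int (Z q)) =
        2 * (of_int (2 * k + 1) * of_real pi * \<i>)"
    using tri AP1 AP2 k unfolding \<gamma>1_def \<gamma>2_def Z_def by simp
  then have "2 * pi * \<i> * ((\<Sum>q\<in>pz. winding_number \<gamma>1 q * of_int (Z q)) +
        (\<Sum>q\<in>pz. winding_number \<gamma>2 q * of_int (Z q))) = 2 * pi * \<i> * of_int (2 * k + 1)"
    by (simp add: algebra_simps)
  then have e1: "(\<Sum>q\<in>pz. winding_number \<gamma>1 q * of_int (Z q)) + (\<Sum>q\<in>pz. winding_number \<gamma>2 q * of_int (Z q))
       = of_int (2 * k + 1)"
    by (subst (asm) mult_cancel_left) simp
  have e2: "(\<Sum>q\<in>pz. winding_number \<gamma>1 q * of_int (Z q)) + (\<Sum>q\<in>pz. winding_number \<gamma>2 q * of_int (Z q))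
      = of_int (\<Sum>q\<in>pz. (n1 q + n2 q) * Z q)"
    by (simp add: sum.distrib[symmetric] distrib_right n1 n2 cong: sum.cong)
  have "(\<Sum>q\<in>pz. (n1 q + n2 q) * Z q) = 2 * k + 1"
    using e1 e2 of_int_eq_iff[where 'a=complex] by metis
  then have sumodd: "odd (\<Sum>q\<in>pz. (n1 q + n2 q) * Z q)" by simp
  define Po where "Po = {z. 0 < cs w1 w2 (z - a) \<and> cs w1 w2 (z - a) < 1 \<and> 0 < ct w1 w2 (z - a) \<and> ct w1 w2 (z - a) < 1}"
  have par: "odd (n1 q + n2 q) \<longleftrightarrow> q \<in> Po" if "q \<in> pz" for q
  proof -
    have "cs w1 w2 (q - a) - ct w1 w2 (q - a) \<noteq> 0" using pz_gen[OF that] by (auto simp: gen_def)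
    note pa = par_aux[OF this]
    have A: "odd (n1 q) \<longleftrightarrow> 0 < ct w1 w2 (q - a) \<and> ct w1 w2 (q - a) < cs w1 w2 (q - a) \<and> cs w1 w2 (q - a) < 1"
      using n1[OF that] by blast
    have B: "odd (n2 q) \<longleftrightarrow> 0 < cs w1 w2 (q - a) \<and> cs w1 w2 (q - a) < ct w1 w2 (q - a) \<and> ct w1 w2 (q - a) < 1"
      using n2[OF that] by blast
    have "odd (n1 q + n2 q) \<longleftrightarrow> (odd (n1 q) \<noteq> odd (n2 q))" by simp
    also have "\<dots> \<longleftrightarrow> q \<in> Po" unfolding A B pa by (simp add: Po_def)
    finally show ?thesis .
  qed
  have "even ((\<Sum>q\<in>pz. (n1 q + n2 q) * Z q) - (\<Sum>q\<in>pz. if q \<in> Po then Z q else 0))"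
    unfolding sum_subtractf[symmetric]
  proof (rule dvd_sum)
    fix q assume q: "q \<in> pz"
    show "even ((n1 q + n2 q) * Z q - (if q \<in> Po then Z q else 0))"
    proof (cases "q \<in> Po")
      case True
      then have "odd (n1 q + n2 q)" using par[OF q] by simp
      then have "even (n1 q + n2 q - 1)" by simp
      then have "even ((n1 q + n2 q - 1) * Z q)" by simp
      then show ?thesis using True by (simp add: algebra_simps)
    next
      case False
      then show ?thesis using par[OF q] by simp
    qed
  qed
  moreover have "(\<Sum>q\<in>pz. if q \<in> Po then Z q else 0) = (\<Sum>q\<in>pz \<inter> Po. Z q)"
    using finpz by (simp add: sum.inter_restrict)
  ultimately have "even ((\<Sum>q\<in>pz. (n1 q + n2 q) * Z q) - (\<Sum>q\<in>pz \<inter> Po. Z q))" by simp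
  then have oddA: "odd (\<Sum>q\<in>pz \<inter> Po. Z q)" using sumodd by (simp add: even_diff even_add)
  define rep where "rep = (\<lambda>i. p i + of_int (- \<lfloor>cs w1 w2 (p i - a)\<rfloor>) * w1 + of_int (- \<lfloor>ct w1 w2 (p i - a)\<rfloor>) * w2)"
  have rep_lat: "rep i = p i + lam \<and> lam \<in> lattice w1 w2" if "lam = rep i - p i" for i lam
  proof -
    have le: "lam = of_int (- \<lfloor>cs w1 w2 (p i - a)\<rfloor>) * w1 + of_int (- \<lfloor>ct w1 w2 (p i - a)\<rfloor>) * w2"
      using that unfolding rep_def by simp
    then have "lam \<in> lattice w1 w2" unfolding lattice_def by blast
    moreover have "rep i = p i + lam" using that by simp
    ultimately show ?thesis by blast
  qed
  have repS: "rep i \<in> S" if "i < N" for i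
    using that rep_lat[OF refl, of i] unfolding S_def by blast
  have rep_coord: "cs w1 w2 (rep i - a) = frac (cs w1 w2 (p i - a))" "ct w1 w2 (rep i - a) = frac (ct w1 w2 (p i - a))" for i
  proof -
    have e: "rep i - a = (p i - a) + of_int (- \<lfloor>cs w1 w2 (p i - a)\<rfloor>) * w1 + of_int (- \<lfloor>ct w1 w2 (p i - a)\<rfloor>) * w2"
      by (simp add: rep_def algebra_simps)
    show "cs w1 w2 (rep i - a) = frac (cs w1 w2 (p i - a))" "ct w1 w2 (rep i - a) = frac (ct w1 w2 (p i - a))"
      unfolding e coord_lat[OF w] by (simp_all add: frac_def)
  qed
  have Po_Pc: "Po \<subseteq> Pc" by (auto simp: Po_def Pc_def)
  have repPo: "rep i \<in> Po" if "i < N" for i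
  proof -
    have "gen w1 w2 a (rep i)" using gX repS[OF that] by (simp add: X_def)
    then have n: "frac (cs w1 w2 (p i - a)) \<notin> \<int>" "frac (ct w1 w2 (p i - a)) \<notin> \<int>"
      by (auto simp: gen_def rep_coord)
    have "frac (cs w1 w2 (p i - a)) \<noteq> 0" "frac (ct w1 w2 (p i - a)) \<noteq> 0"
      using n by (metis Ints_0)+
    moreover have "frac (cs w1 w2 (p i - a)) < 1" "frac (ct w1 w2 (p i - a)) < 1"
      "0 \<le> frac (cs w1 w2 (p i - a))" "0 \<le> frac (ct w1 w2 (p i - a))"
      by (rule frac_lt_1 frac_ge_0)+
    ultimately have "0 < frac (cs w1 w2 (p i - a))" "0 < frac (ct w1 w2 (p i - a))"
      "frac (cs w1 w2 (p i - a)) < 1" "frac (ct w1 w2 (p i - a)) < 1"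
      by (auto simp: less_le)
    then show ?thesis unfolding Po_def mem_Collect_eq rep_coord by blast
  qed
  have inj: "inj_on rep {..<N}"
  proof
    fix i j assume i: "i \<in> {..<N}" and j: "j \<in> {..<N}" and eq: "rep i = rep j"
    show "i = j"
    proof (rule ccontr)
      assume "i \<noteq> j"
      then have nl: "p i - p j \<notin> lattice w1 w2" using assms(3) i j by auto
      have "p i - p j = of_int (\<lfloor>cs w1 w2 (p i - a)\<rfloor> - \<lfloor>cs w1 w2 (p j - a)\<rfloor>) * w1 +
             of_int (\<lfloor>ct w1 w2 (p i - a)\<rfloor> - \<lfloor>ct w1 w2 (p j - a)\<rfloor>) * w2"
        using eq unfolding rep_def by (simp add: algebra_simps)
      then have "p i - p j \<in> lattice w1 w2" unfolding lattice_def by blast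
      with nl show False by blast
    qed
  qed
  have SPo: "S \<inter> Po = rep ` {..<N}"
  proof
    show "rep ` {..<N} \<subseteq> S \<inter> Po" using repS repPo by auto
    show "S \<inter> Po \<subseteq> rep ` {..<N}"
    proof
      fix z assume z: "z \<in> S \<inter> Po"
      then obtain i m n where i: "i < N" and ze: "z = p i + of_int m * w1 + of_int n * w2"
        unfolding S_def lattice_def by (auto simp: add.assoc)
      have c1: "cs w1 w2 (z - a) = cs w1 w2 (p i - a) + of_int m"
        and c2: "ct w1 w2 (z - a) = ct w1 w2 (p i - a) + of_int n"
        using coord_lat[OF w, of "p i - a" m n] by (simp_all add: ze algebra_simps)
      have f1: "\<lfloor>cs w1 w2 (p i - a) + of_int m\<rfloor> = 0"
        by (rule floor_unique) (use z c1 in \<open>auto simp: Po_def\<close>)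
      have f2: "\<lfloor>ct w1 w2 (p i - a) + of_int n\<rfloor> = 0"
        by (rule floor_unique) (use z c2 in \<open>auto simp: Po_def\<close>)
      have "\<lfloor>cs w1 w2 (p i - a)\<rfloor> + m = 0" by (subst floor_add_int) (rule f1)
      then have m: "m = - \<lfloor>cs w1 w2 (p i - a)\<rfloor>" by linarith
      have "\<lfloor>ct w1 w2 (p i - a)\<rfloor> + n = 0" by (subst floor_add_int) (rule f2)
      then have n: "n = - \<lfloor>ct w1 w2 (p i - a)\<rfloor>" by linarith
      from m n have "z = rep i" by (simp add: ze rep_def)
      then show "z \<in> rep ` {..<N}" using i by blast
    qed
  qed
  define A where "A = pz \<inter> Po"
  define C where "C = rep ` {..<N}"
  have finA: "finite A" using finpz by (simp add: A_def)
  have finC: "finite C" by (simp add: C_def)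
  have Z0C: "Z q = 0" if "q \<in> C - A" for q
  proof -
    have qPo: "q \<in> Po" using that SPo by (auto simp: C_def)
    have "norm q < R" using Pc_ball Po_Pc qPo by blast
    then have "deriv g q \<noteq> 0" "\<not> is_pole g q" using that qPo by (auto simp: A_def pz_def)
    then have "g analytic_on {q}" using nicely_meromorphic_on_imp_analytic_at[OF nm, of q] by simp
    then have "deriv g analytic_on {q}" by (rule analytic_deriv)
    then show ?thesis unfolding Z_def using \<open>deriv g q \<noteq> 0\<close> by (rule zorder_eq_0I)
  qed
  have freq: "frequently (\<lambda>z. deriv g z \<noteq> 0) (at q)" for q
    using cs_at[OF nzD, of q] by (intro eventually_frequently) auto
  have s1: "(\<Sum>q\<in>A. Z q) = (\<Sum>q\<in>A \<union> C. Z q)"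
    by (rule sum.mono_neutral_left) (use finA finC Z0C in auto)
  have s2: "(\<Sum>q\<in>A \<union> C. Z q) = (\<Sum>q\<in>(A \<union> C) - C. Z q) + (\<Sum>q\<in>C. Z q)"
    by (rule sum.subset_diff) (use finA finC in auto)
  have ev1: "even (\<Sum>q\<in>(A \<union> C) - C. Z q)"
  proof (rule dvd_sum)
    fix q assume q: "q \<in> (A \<union> C) - C"
    then have "q \<notin> S" using SPo by (auto simp: A_def C_def)
    then have "isCont u q" by (rule ucont)
    then have "eventually (\<lambda>z. dist (u z) (u q) < 1) (at q)"
      by (intro tendstoD) (auto simp: isCont_def)
    then have bd: "eventually (\<lambda>z. \<bar>u z - 2 * real 0 * ln (cmod (z - q))\<bar> \<le> \<bar>u q\<bar> + 1) (at q)"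
      by eventually_elim (auto simp: dist_real_def)
    have "even (zorder (deriv g) q - int 0)" by (rule LOC[OF nm freq evu bd])
    then show "even (Z q)" by (simp add: Z_def)
  qed
  have ev2: "even (Z (rep i) - int (l i))" if i: "i < N" for i
  proof -
    define lam where "lam = rep i - p i"
    have rl: "rep i = p i + lam" "lam \<in> lattice w1 w2" using rep_lat[OF lam_def] by auto
    from sing i obtain r B where r: "r > 0" and rB: "\<forall>z. 0 < cmod (z - p i) \<and> cmod (z - p i) < r \<longrightarrow>
            \<bar>u z - 2 * real (l i) * ln (cmod (z - p i))\<bar> \<le> B" by blast
    have bd: "eventually (\<lambda>z. \<bar>u z - 2 * real (l i) * ln (cmod (z - rep i))\<bar> \<le> B) (at (rep i))"
      unfolding eventually_at
    proof (intro exI[of _ r] conjI ballI impI)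
      fix z :: complex assume z: "z \<noteq> rep i \<and> dist z (rep i) < r"
      have e: "(z - lam) - p i = z - rep i" using rl by (simp add: algebra_simps)
      have "u z = u ((z - lam) + lam)" by simp
      also have "\<dots> = u (z - lam)" by (rule lattice_periodic[OF per rl(2)])
      finally have uz: "u z = u (z - lam)" .
      have "0 < cmod ((z - lam) - p i) \<and> cmod ((z - lam) - p i) < r"
        unfolding e using z by (auto simp: dist_norm)
      with rB have "\<bar>u (z - lam) - 2 * real (l i) * ln (cmod ((z - lam) - p i))\<bar> \<le> B" by blast
      then show "\<bar>u z - 2 * real (l i) * ln (cmod (z - rep i))\<bar> \<le> B" unfolding uz e .
    qed (use r in auto)
    have "even (zorder (deriv g) (rep i) - int (l i))" by (rule LOC[OF nm freq evu bd])
    then show ?thesis by (simp add: Z_def)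
  qed
  have "(\<Sum>q\<in>C. Z q) = (\<Sum>i<N. Z (rep i))"
    unfolding C_def by (simp add: sum.reindex[OF inj])
  moreover have "even ((\<Sum>i<N. Z (rep i)) - (\<Sum>i<N. int (l i)))"
    unfolding sum_subtractf[symmetric] by (rule dvd_sum) (use ev2 in auto)
  moreover have "even (\<Sum>i<N. int (l i))"
  proof -
    have "(\<Sum>i<N. int (l i)) = int (\<Sum>i<N. l i)" by simp
    moreover have "even (int (\<Sum>i<N. l i))" using assms(5) by (simp only: even_of_nat)
    ultimately show ?thesis by simp
  qed
  ultimately have ev3: "even (\<Sum>q\<in>C. Z q)"
    by (simp add: even_diff even_add)
  have "even (\<Sum>q\<in>A. Z q)" using s1 s2 ev1 ev3 by simp
  then show False using oddA by (simp add: A_def)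
qed

end
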